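(* (i) The formal series $\Lambda(\lambda^{(0)},\nu^{(0)})$ and $\mathcal N(\lambda^{(0)},\nu^{(0)})$ (expanded in $\eta^{-1}$) coincide respectively with $\lambda^{(0)}(t,c-\eta^{-1},\eta)$ and $\nu^{(0)}(t,c-\eta^{-1},\eta)$, the 0-parameter solution of $(H_{\rm II})$ with $c$ replaced by $c-\eta^{-1}$ (re-expanded in $\eta^{-1}$, with the same leading term $\lambda_0(t,c)$). (ii) The formal solution $R$ satisfies $$R(t,c,\eta)-R(t,c-\eta^{-1},\eta)=-\frac{d}{dt}\log\Big\{1+\big(c-\tfrac12\eta^{-1}\big)\frac{\eta^{-1}R(t,c,\eta)-2\lambda^{(0)}(t,c,\eta)}{\big(\nu^{(0)}(t,c,\eta)-\lambda^{(0)}(t,c,\eta)^2-\frac12t\big)^2}\Big\},$$ where $R(t,c-\eta^{-1},\eta)$ is the corresponding formal Riccati solution for the parameter $c-\eta^{-1}$ (re-expanded in $\eta^{-1}$).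
   Context: Let $\eta$ be a large parameter, $c\in\mathbb C\setminus\{0\}$. $(H_{\rm II})$: $\frac{d\lambda}{dt}=\eta\nu$, $\frac{d\nu}{dt}=\eta(2\lambda^3+t\lambda+c)$. Let $\lambda_0(t,c)$ be a branch of the algebraic function $2\lambda_0^3+t\lambda_0+c=0$. The 0-parameter solution is the unique pair of formal power series $\lambda^{(0)}=\sum_{k\ge0}\eta^{-k}\lambda^{(0)}_k(t,c)$, $\nu^{(0)}=\sum_{k\ge0}\eta^{-k}\nu^{(0)}_k(t,c)$ solving $(H_{\rm II})$ formally with $\lambda^{(0)}_0=\lambda_0$, $\nu^{(0)}_0=0$. Set $\Delta=6\lambda_0^2+t$. Let $R=\sum_{k\ge-1}\eta^{-k}R_k$ be the formal solution of $R^2+\frac{dR}{dt}=\eta^2(6(\lambda^{(0)})^2+t)$ with $R_{-1}=\sqrt\Delta$ (fixed branch). The Bäcklund transformation is $\Lambda(\lambda,\nu)=-\lambda+\frac{c-\frac12\eta^{-1}}{\nu-\lambda^2-\frac12t}$, $\mathcal N(\lambda,\nu)=-\nu+\frac{2(c-\frac12\eta^{-1})\lambda}{\nu-\lambda^2-\frac12t}-\Big(\frac{c-\frac12\eta^{-1}}{\nu-\lambda^2-\frac12t}\Big)^2$; it maps solutions of $(H_{\rm II})$ to solutions of the same system with $c$ replaced by $c-\eta^{-1}$. *)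

theory Defs
  imports "HOL-Analysis.Analysis" "HOL-Computational_Algebra.Formal_Power_Series"
begin

text \<open>A formal series in eta^{-1} whose coefficients depend on (t,c) is
represented as a family S :: complex => complex => complex fps, where S t c $ k is the
coefficient of eta^{-k} evaluated at (t,c); the formal variable fps_X stands for eta^{-1}.
Products, quotients (by series with nonzero constant term) etc. are computed pointwise in (t,c),
which agrees with the coefficientwise operations.\<close>

definition fdt :: "(complex \<Rightarrow> complex \<Rightarrow> complex fps) \<Rightarrow> complex \<Rightarrow> complex \<Rightarrow> complex fps" where
  "fdt S t c = Abs_fps (\<lambda>n. deriv (\<lambda>s. fps_nth (S s c) n) t)"

text \<open>Substitution c := c - eta^{-1}, re-expanded in eta^{-1} by Taylor expansion in c:
  coefficient k of S(t, c - eta^{-1}) is sum over j+m=k of (-1)^m/m! d^m/dc^m S_j(t,c).\<close>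
definition cshift :: "(complex \<Rightarrow> complex \<Rightarrow> complex fps) \<Rightarrow> complex \<Rightarrow> complex \<Rightarrow> complex fps" where
  "cshift S t c = Abs_fps (\<lambda>k. \<Sum>m\<le>k. (-1)^m / fact m * (deriv ^^ m) (\<lambda>d. fps_nth (S t d) (k - m)) c)"

definition fdlog :: "(complex \<Rightarrow> complex \<Rightarrow> complex fps) \<Rightarrow> complex \<Rightarrow> complex \<Rightarrow> complex fps" where
  "fdlog S t c = fdt S t c / S t c"

definition chalf :: "complex \<Rightarrow> complex fps" where
  "chalf c = fps_const c - fps_const (1/2) * fps_X"

definition bden :: "complex \<Rightarrow> complex fps \<Rightarrow> complex fps \<Rightarrow> complex fps" where
  "bden t l n = n - l ^ 2 - fps_const (t / 2)"

definition BLambda :: "complex \<Rightarrow> complex \<Rightarrow> complex fps \<Rightarrow> complex fps \<Rightarrow> complex fps" where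
  "BLambda t c l n = - l + chalf c / bden t l n"

definition BN :: "complex \<Rightarrow> complex \<Rightarrow> complex fps \<Rightarrow> complex fps \<Rightarrow> complex fps" where
  "BN t c l n = - n + fps_const 2 * chalf c * l / bden t l n - (chalf c / bden t l n) ^ 2"

text \<open>0-parameter solution of (H_II) (equations multiplied by eta^{-1}):
  eta^{-1} d lambda/dt = nu,  eta^{-1} d nu/dt = 2 lambda^3 + t lambda + c,
  with lambda_0 = l0, nu_0 = 0.\<close>
definition zero_param_solution ::
  "(complex \<times> complex) set \<Rightarrow> (complex \<Rightarrow> complex \<Rightarrow> complex) \<Rightarrow>
   (complex \<Rightarrow> complex \<Rightarrow> complex fps) \<Rightarrow> (complex \<Rightarrow> complex \<Rightarrow> complex fps) \<Rightarrow> bool" where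
  "zero_param_solution U l0 lam nu \<longleftrightarrow>
     (\<forall>(t, c)\<in>U. fps_nth (lam t c) 0 = l0 t c \<and> fps_nth (nu t c) 0 = 0 \<and>
        fps_X * fdt lam t c = nu t c \<and>
        fps_X * fdt nu t c = fps_const 2 * lam t c ^ 3 + fps_const t * lam t c + fps_const c)"

text \<open>Rt represents eta^{-1} R, i.e. Rt t c $ k = R_{k-1}(t,c), so
  R = eta * Rt. The equation R^2 + dR/dt = eta^2 (6 lambda^2 + t) becomes
  Rt^2 + eta^{-1} dRt/dt = 6 lambda^2 + t, with R_{-1} = sq (the fixed branch of sqrt Delta).\<close>
definition riccati_solution ::
  "(complex \<times> complex) set \<Rightarrow> (complex \<Rightarrow> complex \<Rightarrow> complex) \<Rightarrow>
   (complex \<Rightarrow> complex \<Rightarrow> complex fps) \<Rightarrow> (complex \<Rightarrow> complex \<Rightarrow> complex fps) \<Rightarrow> bool" where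
  "riccati_solution U sq lam Rt \<longleftrightarrow>
     (\<forall>(t, c)\<in>U. fps_nth (Rt t c) 0 = sq t c \<and>
        Rt t c ^ 2 + fps_X * fdt Rt t c = fps_const 6 * lam t c ^ 2 + fps_const t)"

definition logarg ::
  "(complex \<Rightarrow> complex \<Rightarrow> complex fps) \<Rightarrow> (complex \<Rightarrow> complex \<Rightarrow> complex fps) \<Rightarrow>
   (complex \<Rightarrow> complex \<Rightarrow> complex fps) \<Rightarrow> complex \<Rightarrow> complex \<Rightarrow> complex fps" where
  "logarg Rt lam nu t c =
     1 + chalf c * (Rt t c - fps_const 2 * lam t c) / (bden t (lam t c) (nu t c)) ^ 2"

end

theory Submission
  imports Defs
begin


definition eqU :: "(complex \<times> complex) set \<Rightarrow> (complex \<Rightarrow> complex \<Rightarrow> 'a) \<Rightarrow> (complex \<Rightarrow> complex \<Rightarrow> 'a) \<Rightarrow> bool" where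
  "eqU U f g \<longleftrightarrow> (\<forall>t c. (t, c) \<in> U \<longrightarrow> f t c = g t c)"

definition Dt :: "(complex \<Rightarrow> complex \<Rightarrow> complex) \<Rightarrow> complex \<Rightarrow> complex \<Rightarrow> complex" where
  "Dt f = (\<lambda>t c. deriv (\<lambda>s. f s c) t)"

definition Dc :: "(complex \<Rightarrow> complex \<Rightarrow> complex) \<Rightarrow> complex \<Rightarrow> complex \<Rightarrow> complex" where
  "Dc f = (\<lambda>t c. deriv (\<lambda>d. f t d) c)"

lemma ev_t:
  assumes "open U" "(t, c) \<in> U"
  shows "eventually (\<lambda>s. (s, c) \<in> U) (nhds t)"
proof -
  have "((\<lambda>s. (s, c)) \<longlongrightarrow> (t, c)) (nhds t)"
    by (intro tendsto_Pair filterlim_ident tendsto_const)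
  from topological_tendstoD[OF this assms(1,2)] show ?thesis .
qed

lemma ev_c:
  assumes "open U" "(t, c) \<in> U"
  shows "eventually (\<lambda>d. (t, d) \<in> U) (nhds c)"
proof -
  have "((\<lambda>d. (t, d)) \<longlongrightarrow> (t, c)) (nhds c)"
    by (intro tendsto_Pair filterlim_ident tendsto_const)
  from topological_tendstoD[OF this assms(1,2)] show ?thesis .
qed

locale PII =
  fixes U :: "(complex \<times> complex) set" and l0 sq :: "complex \<Rightarrow> complex \<Rightarrow> complex"
  assumes openU: "open U"
    and cnz: "\<And>t c. (t, c) \<in> U \<Longrightarrow> c \<noteq> 0"
    and l0t: "\<And>t c. (t, c) \<in> U \<Longrightarrow> (\<lambda>s. l0 s c) field_differentiable (at t)"
    and l0c: "\<And>t c. (t, c) \<in> U \<Longrightarrow> (\<lambda>d. l0 t d) field_differentiable (at c)"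
    and cub: "\<And>t c. (t, c) \<in> U \<Longrightarrow> 2 * l0 t c ^ 3 + t * l0 t c + c = 0"
    and dnz: "\<And>t c. (t, c) \<in> U \<Longrightarrow> 6 * l0 t c ^ 2 + t \<noteq> 0"
    and sqt: "\<And>t c. (t, c) \<in> U \<Longrightarrow> (\<lambda>s. sq s c) field_differentiable (at t)"
    and sqc: "\<And>t c. (t, c) \<in> U \<Longrightarrow> (\<lambda>d. sq t d) field_differentiable (at c)"
    and sqsq: "\<And>t c. (t, c) \<in> U \<Longrightarrow> sq t c ^ 2 = 6 * l0 t c ^ 2 + t"
begin

definition Del :: "complex \<Rightarrow> complex \<Rightarrow> complex" where
  "Del t c = 6 * l0 t c ^ 2 + t"

lemma Del_nz[simp]: "(t, c) \<in> U \<Longrightarrow> Del t c = 0 \<longleftrightarrow> False"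
  using dnz by (simp add: Del_def)

lemma sq_nz[simp]: "(t, c) \<in> U \<Longrightarrow> sq t c = 0 \<longleftrightarrow> False"
  using dnz sqsq by fastforce

lemma sq2: "(t, c) \<in> U \<Longrightarrow> sq t c ^ 2 = Del t c"
  using sqsq by (simp add: Del_def)

lemma evt: "(t, c) \<in> U \<Longrightarrow> eventually (\<lambda>s. (s, c) \<in> U) (nhds t)"
  using ev_t openU by blast
lemma evc: "(t, c) \<in> U \<Longrightarrow> eventually (\<lambda>d. (t, d) \<in> U) (nhds c)"
  using ev_c openU by blast

lemma Dt_cong: "eqU U f g \<Longrightarrow> (t, c) \<in> U \<Longrightarrow> Dt f t c = Dt g t c"
  unfolding Dt_def eqU_def
  by (rule deriv_cong_ev) (auto elim!: eventually_mono[OF evt])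

lemma Dc_cong: "eqU U f g \<Longrightarrow> (t, c) \<in> U \<Longrightarrow> Dc f t c = Dc g t c"
  unfolding Dc_def eqU_def
  by (rule deriv_cong_ev) (auto elim!: eventually_mono[OF evc])

lemma fdiff_cong_t:
  assumes "eqU U f g" "(t, c) \<in> U" "(\<lambda>s. g s c) field_differentiable (at t)"
  shows "(\<lambda>s. f s c) field_differentiable (at t)"
proof -
  obtain D where D: "((\<lambda>s. g s c) has_field_derivative D) (at t)"
    using assms(3) field_differentiable_def by blast
  have "eventually (\<lambda>s. f s c = g s c) (nhds t)"
    using assms(1,2) unfolding eqU_def by (auto elim!: eventually_mono[OF evt])
  then have "((\<lambda>s. f s c) has_field_derivative D) (at t)"
    using D DERIV_cong_ev[of t t "\<lambda>s. f s c" "\<lambda>s. g s c" D D] by simp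
  then show ?thesis using field_differentiable_def by blast
qed

lemma fdiff_cong_c:
  assumes "eqU U f g" "(t, c) \<in> U" "(\<lambda>d. g t d) field_differentiable (at c)"
  shows "(\<lambda>d. f t d) field_differentiable (at c)"
proof -
  obtain D where D: "((\<lambda>d. g t d) has_field_derivative D) (at c)"
    using assms(3) field_differentiable_def by blast
  have "eventually (\<lambda>d. f t d = g t d) (nhds c)"
    using assms(1,2) unfolding eqU_def by (auto elim!: eventually_mono[OF evc])
  then have "((\<lambda>d. f t d) has_field_derivative D) (at c)"
    using D DERIV_cong_ev[of c c "\<lambda>d. f t d" "\<lambda>d. g t d" D D] by simp
  then show ?thesis using field_differentiable_def by blast
qed

inductive_set Gi :: "(complex \<Rightarrow> complex \<Rightarrow> complex) set" where
  Gconst: "(\<lambda>t c. k) \<in> Gi"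
| Gt: "(\<lambda>t c. t) \<in> Gi"
| Gc: "(\<lambda>t c. c) \<in> Gi"
| Gl: "l0 \<in> Gi"
| Gs: "sq \<in> Gi"
| Gadd: "f \<in> Gi \<Longrightarrow> g \<in> Gi \<Longrightarrow> (\<lambda>t c. f t c + g t c) \<in> Gi"
| Gmul: "f \<in> Gi \<Longrightarrow> g \<in> Gi \<Longrightarrow> (\<lambda>t c. f t c * g t c) \<in> Gi"
| Ginv: "f \<in> Gi \<Longrightarrow> (\<forall>t c. (t, c) \<in> U \<longrightarrow> f t c \<noteq> 0) \<Longrightarrow> (\<lambda>t c. inverse (f t c)) \<in> Gi"

lemma Gi_diff:
  "f \<in> Gi \<Longrightarrow> (t, c) \<in> U \<Longrightarrow> (\<lambda>s. f s c) field_differentiable (at t) \<and> (\<lambda>d. f t d) field_differentiable (at c)"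
proof (induction arbitrary: t c rule: Gi.induct)
  case (Ginv f)
  then show ?case by (auto intro!: field_differentiable_inverse)
qed (auto intro!: field_differentiable_add field_differentiable_mult l0t l0c sqt sqc
          field_differentiable_ident field_differentiable_const)

definition good :: "(complex \<Rightarrow> complex \<Rightarrow> complex) \<Rightarrow> bool" where
  "good f \<longleftrightarrow> (\<exists>g\<in>Gi. eqU U f g)"

lemma good_t: "good f \<Longrightarrow> (t, c) \<in> U \<Longrightarrow> (\<lambda>s. f s c) field_differentiable (at t)"
  unfolding good_def using Gi_diff fdiff_cong_t by blast
lemma good_c: "good f \<Longrightarrow> (t, c) \<in> U \<Longrightarrow> (\<lambda>d. f t d) field_differentiable (at c)"
  unfolding good_def using Gi_diff fdiff_cong_c by blast

lemma Gi_good: "f \<in> Gi \<Longrightarrow> good f"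
  unfolding good_def eqU_def by blast

lemma good_cong: "eqU U f g \<Longrightarrow> good g \<Longrightarrow> good f"
  unfolding good_def eqU_def by auto

lemma good_const[simp]: "good (\<lambda>t c. k)" by (rule Gi_good, rule Gconst)
lemma good_tv[simp]: "good (\<lambda>t c. t)" by (rule Gi_good, rule Gt)
lemma good_cv[simp]: "good (\<lambda>t c. c)" by (rule Gi_good, rule Gc)
lemma good_l0[simp]: "good l0" by (rule Gi_good, rule Gl)
lemma good_sq[simp]: "good sq" by (rule Gi_good, rule Gs)

lemma good_add[simp]: assumes "good f" "good g" shows "good (\<lambda>t c. f t c + g t c)"
proof -
  obtain a b where ab: "a \<in> Gi" "eqU U f a" "b \<in> Gi" "eqU U g b" using assms good_def by auto
  then show ?thesis unfolding good_def eqU_def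
    by (intro bexI[of _ "\<lambda>t c. a t c + b t c"]) (auto intro: Gadd)
qed
lemma good_mul[simp]: assumes "good f" "good g" shows "good (\<lambda>t c. f t c * g t c)"
proof -
  obtain a b where ab: "a \<in> Gi" "eqU U f a" "b \<in> Gi" "eqU U g b" using assms good_def by auto
  then show ?thesis unfolding good_def eqU_def
    by (intro bexI[of _ "\<lambda>t c. a t c * b t c"]) (auto intro: Gmul)
qed
lemma good_inv[simp]: "good f \<Longrightarrow> (\<forall>t c. (t, c) \<in> U \<longrightarrow> f t c \<noteq> 0) \<Longrightarrow> good (\<lambda>t c. inverse (f t c))"
  unfolding good_def eqU_def
proof clarify
  fix g assume g: "g \<in> Gi" "\<forall>t c. (t, c) \<in> U \<longrightarrow> f t c = g t c" and nz: "\<forall>t c. (t, c) \<in> U \<longrightarrow> f t c \<noteq> 0"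
  then have "(\<lambda>t c. inverse (g t c)) \<in> Gi" by (auto intro!: Ginv)
  then show "\<exists>h\<in>Gi. \<forall>t c. (t, c) \<in> U \<longrightarrow> inverse (f t c) = h t c" using g by auto
qed

lemma good_minus[simp]: "good f \<Longrightarrow> good (\<lambda>t c. - f t c)"
  using good_mul[of "\<lambda>t c. -1" f] by simp
lemma good_diff[simp]: "good f \<Longrightarrow> good g \<Longrightarrow> good (\<lambda>t c. f t c - g t c)"
  using good_add[of f "\<lambda>t c. - g t c"] by simp
lemma good_div[simp]: "good f \<Longrightarrow> good g \<Longrightarrow> (\<forall>t c. (t, c) \<in> U \<longrightarrow> g t c \<noteq> 0) \<Longrightarrow> good (\<lambda>t c. f t c / g t c)"
  using good_mul[of f "\<lambda>t c. inverse (g t c)"] by (simp add: divide_inverse)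
lemma good_pow[simp]: "good f \<Longrightarrow> good (\<lambda>t c. f t c ^ n)"
  by (induction n) auto
lemma good_sum[simp]: "(\<And>i. i \<in> A \<Longrightarrow> good (g i)) \<Longrightarrow> good (\<lambda>t c. \<Sum>i\<in>A. g i t c)"
proof (induction A rule: infinite_finite_induct)
  case (insert x F) then show ?case by (simp add: good_add)
qed auto
lemma good_Del[simp]: "good Del" unfolding Del_def by auto


lemma good_eqI: "(\<And>t c. (t, c) \<in> U \<Longrightarrow> f t c = g t c) \<Longrightarrow> good g \<Longrightarrow> good f"
  using good_cong unfolding eqU_def by blast

lemma eqUI: "(\<And>t c. (t, c) \<in> U \<Longrightarrow> f t c = g t c) \<Longrightarrow> eqU U f g"
  unfolding eqU_def by blast

subsection \<open>Calculus\<close>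

lemma Dt_add[simp]: "good f \<Longrightarrow> good g \<Longrightarrow> (t, c) \<in> U \<Longrightarrow> Dt (\<lambda>t c. f t c + g t c) t c = Dt f t c + Dt g t c"
  by (simp add: Dt_def good_t)
lemma Dt_diff[simp]: "good f \<Longrightarrow> good g \<Longrightarrow> (t, c) \<in> U \<Longrightarrow> Dt (\<lambda>t c. f t c - g t c) t c = Dt f t c - Dt g t c"
  by (simp add: Dt_def good_t)
lemma Dt_minus[simp]: "good f \<Longrightarrow> (t, c) \<in> U \<Longrightarrow> Dt (\<lambda>t c. - f t c) t c = - Dt f t c"
  by (simp add: Dt_def good_t)
lemma Dt_mul[simp]: "good f \<Longrightarrow> good g \<Longrightarrow> (t, c) \<in> U \<Longrightarrow> Dt (\<lambda>t c. f t c * g t c) t c = Dt f t c * g t c + f t c * Dt g t c"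
  by (simp add: Dt_def good_t)
lemma Dt_inv[simp]: "good f \<Longrightarrow> (t, c) \<in> U \<Longrightarrow> f t c \<noteq> 0 \<Longrightarrow> Dt (\<lambda>t c. inverse (f t c)) t c = - Dt f t c / f t c ^ 2"
  by (simp add: Dt_def good_t)
lemma Dt_div[simp]: "good f \<Longrightarrow> good g \<Longrightarrow> (t, c) \<in> U \<Longrightarrow> g t c \<noteq> 0 \<Longrightarrow> Dt (\<lambda>t c. f t c / g t c) t c = (Dt f t c * g t c - f t c * Dt g t c) / g t c ^ 2"
  by (simp add: Dt_def good_t)
lemma Dt_pow[simp]: assumes "good f" "(t, c) \<in> U" shows "Dt (\<lambda>t c. f t c ^ n) t c = of_nat n * f t c ^ (n - 1) * Dt f t c"
proof -
  have "deriv (\<lambda>s. f s c ^ n) t = of_nat n * deriv (\<lambda>s. f s c) t * f t c ^ (n - 1)"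
    using DERIV_imp_deriv[OF DERIV_power[OF field_differentiable_derivI[OF good_t[OF assms]]], of n] by (simp add: mult_ac)
  then show ?thesis by (simp add: Dt_def)
qed
lemma Dt_cfun[simp]: "Dt (\<lambda>t c. F c) t c = 0"
  by (simp add: Dt_def)
lemma Dt_tv[simp]: "Dt (\<lambda>t c. t) t c = 1"
  by (simp add: Dt_def)

lemma Dc_add[simp]: "good f \<Longrightarrow> good g \<Longrightarrow> (t, c) \<in> U \<Longrightarrow> Dc (\<lambda>t c. f t c + g t c) t c = Dc f t c + Dc g t c"
  by (simp add: Dc_def good_c)
lemma Dc_diff[simp]: "good f \<Longrightarrow> good g \<Longrightarrow> (t, c) \<in> U \<Longrightarrow> Dc (\<lambda>t c. f t c - g t c) t c = Dc f t c - Dc g t c"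
  by (simp add: Dc_def good_c)
lemma Dc_minus[simp]: "good f \<Longrightarrow> (t, c) \<in> U \<Longrightarrow> Dc (\<lambda>t c. - f t c) t c = - Dc f t c"
  by (simp add: Dc_def good_c)
lemma Dc_mul[simp]: "good f \<Longrightarrow> good g \<Longrightarrow> (t, c) \<in> U \<Longrightarrow> Dc (\<lambda>t c. f t c * g t c) t c = Dc f t c * g t c + f t c * Dc g t c"
  by (simp add: Dc_def good_c)
lemma Dc_inv[simp]: "good f \<Longrightarrow> (t, c) \<in> U \<Longrightarrow> f t c \<noteq> 0 \<Longrightarrow> Dc (\<lambda>t c. inverse (f t c)) t c = - Dc f t c / f t c ^ 2"
  by (simp add: Dc_def good_c)
lemma Dc_div[simp]: "good f \<Longrightarrow> good g \<Longrightarrow> (t, c) \<in> U \<Longrightarrow> g t c \<noteq> 0 \<Longrightarrow> Dc (\<lambda>t c. f t c / g t c) t c = (Dc f t c * g t c - f t c * Dc g t c) / g t c ^ 2"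
  by (simp add: Dc_def good_c)
lemma Dc_pow[simp]: assumes "good f" "(t, c) \<in> U" shows "Dc (\<lambda>t c. f t c ^ n) t c = of_nat n * f t c ^ (n - 1) * Dc f t c"
proof -
  have "deriv (\<lambda>d. f t d ^ n) c = of_nat n * deriv (\<lambda>d. f t d) c * f t c ^ (n - 1)"
    using DERIV_imp_deriv[OF DERIV_power[OF field_differentiable_derivI[OF good_c[OF assms]]], of n] by (simp add: mult_ac)
  then show ?thesis by (simp add: Dc_def)
qed
lemma Dc_tfun[simp]: "Dc (\<lambda>t c. F t) t c = 0"
  by (simp add: Dc_def)
lemma Dc_cv[simp]: "Dc (\<lambda>t c. c) t c = 1"
  by (simp add: Dc_def)

lemma Dt_l0[simp]: assumes "(t, c) \<in> U" shows "Dt l0 t c = - l0 t c / Del t c"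
proof -
  define L where "L = Dt l0 t c"
  have d: "((\<lambda>s. l0 s c) has_field_derivative L) (at t)"
    unfolding L_def Dt_def using l0t[OF assms] by (simp add: field_differentiable_derivI)
  have h1: "((\<lambda>s. 2 * l0 s c ^ 3 + s * l0 s c + c) has_field_derivative (2 * (of_nat 3 * L * l0 t c ^ 2) + (1 * l0 t c + t * L) + 0)) (at t)"
    by (auto intro!: derivative_eq_intros d simp: algebra_simps)
  have ev: "eventually (\<lambda>s. 2 * l0 s c ^ 3 + s * l0 s c + c = 0) (nhds t)"
    using evt[OF assms] by (auto elim!: eventually_mono intro: cub)
  have h0: "((\<lambda>s. 2 * l0 s c ^ 3 + s * l0 s c + c) has_field_derivative 0) (at t)"
    using DERIV_cong_ev[of t t "\<lambda>s. 2 * l0 s c ^ 3 + s * l0 s c + c" "\<lambda>s. 0" 0 0] ev by simp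
  have "2 * (of_nat 3 * L * l0 t c ^ 2) + (1 * l0 t c + t * L) + 0 = 0"
    using DERIV_unique[OF h1 h0] .
  then have "L * Del t c + l0 t c = 0" by (simp add: Del_def algebra_simps)
  then show ?thesis using assms unfolding L_def[symmetric] by (simp add: field_simps eq_neg_iff_add_eq_0)
qed

lemma Dc_l0[simp]: assumes "(t, c) \<in> U" shows "Dc l0 t c = - 1 / Del t c"
proof -
  define L where "L = Dc l0 t c"
  have d: "((\<lambda>d. l0 t d) has_field_derivative L) (at c)"
    unfolding L_def Dc_def using l0c[OF assms] by (simp add: field_differentiable_derivI)
  have h1: "((\<lambda>d. 2 * l0 t d ^ 3 + t * l0 t d + d) has_field_derivative (2 * (of_nat 3 * L * l0 t c ^ 2) + t * L + 1)) (at c)"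
    by (auto intro!: derivative_eq_intros d simp: algebra_simps)
  have ev: "eventually (\<lambda>d. 2 * l0 t d ^ 3 + t * l0 t d + d = 0) (nhds c)"
    using evc[OF assms] by (auto elim!: eventually_mono intro: cub)
  have h0: "((\<lambda>d. 2 * l0 t d ^ 3 + t * l0 t d + d) has_field_derivative 0) (at c)"
    using DERIV_cong_ev[of c c "\<lambda>d. 2 * l0 t d ^ 3 + t * l0 t d + d" "\<lambda>s. 0" 0 0] ev by simp
  have "2 * (of_nat 3 * L * l0 t c ^ 2) + t * L + 1 = 0"
    using DERIV_unique[OF h1 h0] .
  then have "L * Del t c + 1 = 0" by (simp add: Del_def algebra_simps)
  then show ?thesis using assms unfolding L_def[symmetric] by (simp add: field_simps eq_neg_iff_add_eq_0)
qed

lemma Del_eq: "Del = (\<lambda>t c. 6 * l0 t c ^ 2 + t)"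
  by (intro ext) (simp add: Del_def)

lemma Dt_Del[simp]: assumes "(t, c) \<in> U" shows "Dt Del t c = 1 - 12 * l0 t c ^ 2 / Del t c"
proof -
  have "Dt Del t c = Dt (\<lambda>t c. 6 * l0 t c ^ 2 + t) t c" by (simp add: Del_eq)
  also have "\<dots> = 1 - 12 * l0 t c ^ 2 / Del t c" using assms by (simp add: field_simps power2_eq_square)
  finally show ?thesis .
qed

lemma Dc_Del[simp]: assumes "(t, c) \<in> U" shows "Dc Del t c = - 12 * l0 t c / Del t c"
proof -
  have "Dc Del t c = Dc (\<lambda>t c. 6 * l0 t c ^ 2 + t) t c" by (simp add: Del_eq)
  also have "\<dots> = - 12 * l0 t c / Del t c" using assms by (simp add: field_simps power2_eq_square)
  finally show ?thesis .
qed

lemma Dt_sq[simp]: assumes "(t, c) \<in> U" shows "Dt sq t c = (1 - 12 * l0 t c ^ 2 / Del t c) / (2 * sq t c)"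
proof -
  define L where "L = Dt sq t c"
  have d: "((\<lambda>s. sq s c) has_field_derivative L) (at t)"
    unfolding L_def Dt_def using sqt[OF assms] by (simp add: field_differentiable_derivI)
  have d2: "((\<lambda>s. Del s c) has_field_derivative Dt Del t c) (at t)"
    unfolding Dt_def using good_t[OF good_Del assms] by (simp add: field_differentiable_derivI)
  have h1: "((\<lambda>s. sq s c ^ 2 - Del s c) has_field_derivative (2 * L * sq t c - Dt Del t c)) (at t)"
    by (auto intro!: derivative_eq_intros d d2)
  have ev: "eventually (\<lambda>s. sq s c ^ 2 - Del s c = 0) (nhds t)"
    using evt[OF assms] by (auto elim!: eventually_mono simp: sq2)
  have h0: "((\<lambda>s. sq s c ^ 2 - Del s c) has_field_derivative 0) (at t)"
    using DERIV_cong_ev[of t t "\<lambda>s. sq s c ^ 2 - Del s c" "\<lambda>s. 0" 0 0] ev by simp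
  have "2 * L * sq t c - Dt Del t c = 0"
    using DERIV_unique[OF h1 h0] .
  then have "L * (2 * sq t c) = 1 - 12 * l0 t c ^ 2 / Del t c" using assms by (simp add: algebra_simps)
  then show ?thesis using assms unfolding L_def[symmetric] by (simp add: field_simps)
qed

lemma Dc_sq[simp]: assumes "(t, c) \<in> U" shows "Dc sq t c = - 6 * l0 t c / (Del t c * sq t c)"
proof -
  define L where "L = Dc sq t c"
  have d: "((\<lambda>d. sq t d) has_field_derivative L) (at c)"
    unfolding L_def Dc_def using sqc[OF assms] by (simp add: field_differentiable_derivI)
  have d2: "((\<lambda>d. Del t d) has_field_derivative Dc Del t c) (at c)"
    unfolding Dc_def using good_c[OF good_Del assms] by (simp add: field_differentiable_derivI)
  have h1: "((\<lambda>d. sq t d ^ 2 - Del t d) has_field_derivative (2 * L * sq t c - Dc Del t c)) (at c)"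
    by (auto intro!: derivative_eq_intros d d2)
  have ev: "eventually (\<lambda>d. sq t d ^ 2 - Del t d = 0) (nhds c)"
    using evc[OF assms] by (auto elim!: eventually_mono simp: sq2)
  have h0: "((\<lambda>d. sq t d ^ 2 - Del t d) has_field_derivative 0) (at c)"
    using DERIV_cong_ev[of c c "\<lambda>d. sq t d ^ 2 - Del t d" "\<lambda>s. 0" 0 0] ev by simp
  have "2 * L * sq t c - Dc Del t c = 0"
    using DERIV_unique[OF h1 h0] .
  then have "L * (2 * sq t c) = - 12 * l0 t c / Del t c" using assms by (simp add: algebra_simps eq_neg_iff_add_eq_0)
  then show ?thesis using assms unfolding L_def[symmetric] by (simp add: field_simps)
qed


lemma Dt_congI: "(\<And>t c. (t, c) \<in> U \<Longrightarrow> f t c = g t c) \<Longrightarrow> (t, c) \<in> U \<Longrightarrow> Dt f t c = Dt g t c"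
  using Dt_cong eqUI by blast
lemma Dc_congI: "(\<And>t c. (t, c) \<in> U \<Longrightarrow> f t c = g t c) \<Longrightarrow> (t, c) \<in> U \<Longrightarrow> Dc f t c = Dc g t c"
  using Dc_cong eqUI by blast

lemma Gi_D: "f \<in> Gi \<Longrightarrow> good (Dt f) \<and> good (Dc f)"
proof (induction rule: Gi.induct)
  case (Gconst k) show ?case by (simp add: Dt_def Dc_def)
next
  case Gt show ?case by (simp add: Dt_def Dc_def)
next
  case Gc show ?case by (simp add: Dt_def Dc_def)
next
  case Gl show ?case
    by (intro conjI good_eqI[OF Dt_l0] good_eqI[OF Dc_l0]) auto
next
  case Gs show ?case
    by (intro conjI good_eqI[OF Dt_sq] good_eqI[OF Dc_sq]) auto
next
  case (Gadd f g)
  then have g: "good f" "good g" by (auto intro: Gi_good)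
  show ?case
  proof
    show "good (Dt (\<lambda>t c. f t c + g t c))"
      by (rule good_eqI[of _ "\<lambda>t c. Dt f t c + Dt g t c"]) (use Gadd g in auto)
    show "good (Dc (\<lambda>t c. f t c + g t c))"
      by (rule good_eqI[of _ "\<lambda>t c. Dc f t c + Dc g t c"]) (use Gadd g in auto)
  qed
next
  case (Gmul f g)
  then have g: "good f" "good g" by (auto intro: Gi_good)
  show ?case
  proof
    show "good (Dt (\<lambda>t c. f t c * g t c))"
      by (rule good_eqI[of _ "\<lambda>t c. Dt f t c * g t c + f t c * Dt g t c"]) (use Gmul g in auto)
    show "good (Dc (\<lambda>t c. f t c * g t c))"
      by (rule good_eqI[of _ "\<lambda>t c. Dc f t c * g t c + f t c * Dc g t c"]) (use Gmul g in auto)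
  qed
next
  case (Ginv f)
  then have g: "good f" by (auto intro: Gi_good)
  show ?case
  proof
    show "good (Dt (\<lambda>t c. inverse (f t c)))"
      by (rule good_eqI[of _ "\<lambda>t c. - Dt f t c / f t c ^ 2"]) (use Ginv g in auto)
    show "good (Dc (\<lambda>t c. inverse (f t c)))"
      by (rule good_eqI[of _ "\<lambda>t c. - Dc f t c / f t c ^ 2"]) (use Ginv g in auto)
  qed
qed

lemma good_Dt[simp]: "good f \<Longrightarrow> good (Dt f)"
proof -
  assume "good f"
  then obtain g where g: "g \<in> Gi" "eqU U f g" unfolding good_def by blast
  show "good (Dt f)"
    by (rule good_eqI[of _ "Dt g"]) (use g Gi_D Dt_cong in auto)
qed

lemma good_Dc[simp]: "good f \<Longrightarrow> good (Dc f)"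
proof -
  assume "good f"
  then obtain g where g: "g \<in> Gi" "eqU U f g" unfolding good_def by blast
  show "good (Dc f)"
    by (rule good_eqI[of _ "Dc g"]) (use g Gi_D Dc_cong in auto)
qed

lemma Gi_comm: "f \<in> Gi \<Longrightarrow> (t, c) \<in> U \<Longrightarrow> Dt (Dc f) t c = Dc (Dt f) t c"
proof (induction arbitrary: t c rule: Gi.induct)
  case (Gconst k) show ?case by (simp add: Dt_def Dc_def)
next
  case Gt show ?case by (simp add: Dt_def Dc_def)
next
  case Gc show ?case by (simp add: Dt_def Dc_def)
next
  case Gl
  have 1: "Dt (Dc l0) t c = Dt (\<lambda>t c. - 1 / Del t c) t c"
    by (rule Dt_congI) (simp_all add: Gl)
  have 2: "Dc (Dt l0) t c = Dc (\<lambda>t c. - l0 t c / Del t c) t c"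
    by (rule Dc_congI) (simp_all add: Gl)
  show ?case using Gl by (simp add: 1 2 field_simps power2_eq_square)
next
  case Gs
  have 1: "Dt (Dc sq) t c = Dt (\<lambda>t c. - 6 * l0 t c / (Del t c * sq t c)) t c"
    by (rule Dt_congI) (simp_all add: Gs)
  have 2: "Dc (Dt sq) t c = Dc (\<lambda>t c. (1 - 12 * l0 t c ^ 2 / Del t c) / (2 * sq t c)) t c"
    by (rule Dc_congI) (simp_all add: Gs)
  have 3: "Del t c = sq t c ^ 2" using sq2[OF Gs] by simp
  show ?case using Gs by (simp add: 1 2) (simp add: 3 field_simps)
next
  case (Gadd f g)
  then have g: "good f" "good g" by (auto intro: Gi_good)
  have 1: "Dt (Dc (\<lambda>t c. f t c + g t c)) t c = Dt (\<lambda>t c. Dc f t c + Dc g t c) t c"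
    by (rule Dt_cong[OF eqUI]) (use g Gadd in auto)
  have 2: "Dc (Dt (\<lambda>t c. f t c + g t c)) t c = Dc (\<lambda>t c. Dt f t c + Dt g t c) t c"
    by (rule Dc_cong[OF eqUI]) (use g Gadd in auto)
  show ?case using g Gadd by (simp add: 1 2)
next
  case (Gmul f g)
  then have g: "good f" "good g" by (auto intro: Gi_good)
  have 1: "Dt (Dc (\<lambda>t c. f t c * g t c)) t c = Dt (\<lambda>t c. Dc f t c * g t c + f t c * Dc g t c) t c"
    by (rule Dt_cong[OF eqUI]) (use g Gmul in auto)
  have 2: "Dc (Dt (\<lambda>t c. f t c * g t c)) t c = Dc (\<lambda>t c. Dt f t c * g t c + f t c * Dt g t c) t c"
    by (rule Dc_cong[OF eqUI]) (use g Gmul in auto)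
  show ?case using g Gmul by (simp add: 1 2 algebra_simps)
next
  case (Ginv f)
  then have g: "good f" by (auto intro: Gi_good)
  have 1: "Dt (Dc (\<lambda>t c. inverse (f t c))) t c = Dt (\<lambda>t c. - Dc f t c / f t c ^ 2) t c"
    by (rule Dt_cong[OF eqUI]) (use g Ginv in auto)
  have 2: "Dc (Dt (\<lambda>t c. inverse (f t c))) t c = Dc (\<lambda>t c. - Dt f t c / f t c ^ 2) t c"
    by (rule Dc_cong[OF eqUI]) (use g Ginv in auto)
  show ?case using g Ginv by (simp add: 1 2 algebra_simps)
qed

lemma good_comm: assumes "good f" "(t, c) \<in> U" shows "Dt (Dc f) t c = Dc (Dt f) t c"
proof -
  obtain g where g: "g \<in> Gi" "eqU U f g" using assms unfolding good_def by blast
  have "eqU U (Dc f) (Dc g)" by (rule eqUI) (use g Dc_cong in auto)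
  then have "Dt (Dc f) t c = Dt (Dc g) t c" using Dt_cong assms by blast
  also have "\<dots> = Dc (Dt g) t c" using Gi_comm g assms by blast
  also have "eqU U (Dt g) (Dt f)" by (rule eqUI) (use g Dt_cong eqU_def in auto)
  then have "Dc (Dt g) t c = Dc (Dt f) t c" using Dc_cong assms by blast
  finally show ?thesis .
qed


lemma Dt_sum[simp]: "(\<And>i. i \<in> A \<Longrightarrow> good (g i)) \<Longrightarrow> (t, c) \<in> U \<Longrightarrow> Dt (\<lambda>t c. \<Sum>i\<in>A. g i t c) t c = (\<Sum>i\<in>A. Dt (g i) t c)"
proof (induction A rule: infinite_finite_induct)
  case (infinite A) then show ?case by (simp add: Dt_def)
next
  case empty then show ?case by (simp add: Dt_def)
next
  case (insert x F)
  have "Dt (\<lambda>t c. \<Sum>i\<in>insert x F. g i t c) t c = Dt (\<lambda>t c. g x t c + (\<Sum>i\<in>F. g i t c)) t c"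
    using insert by simp
  also have "\<dots> = Dt (g x) t c + Dt (\<lambda>t c. \<Sum>i\<in>F. g i t c) t c"
    using insert by (intro Dt_add) auto
  finally show ?case using insert by simp
qed

lemma Dc_sum[simp]: "(\<And>i. i \<in> A \<Longrightarrow> good (g i)) \<Longrightarrow> (t, c) \<in> U \<Longrightarrow> Dc (\<lambda>t c. \<Sum>i\<in>A. g i t c) t c = (\<Sum>i\<in>A. Dc (g i) t c)"
proof (induction A rule: infinite_finite_induct)
  case (infinite A) then show ?case by (simp add: Dc_def)
next
  case empty then show ?case by (simp add: Dc_def)
next
  case (insert x F)
  have "Dc (\<lambda>t c. \<Sum>i\<in>insert x F. g i t c) t c = Dc (\<lambda>t c. g x t c + (\<Sum>i\<in>F. g i t c)) t c"
    using insert by simp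
  also have "\<dots> = Dc (g x) t c + Dc (\<lambda>t c. \<Sum>i\<in>F. g i t c) t c"
    using insert by (intro Dc_add) auto
  finally show ?case using insert by simp
qed

subsection \<open>Families of formal power series\<close>

lemma good_if[simp]: "good f \<Longrightarrow> good g \<Longrightarrow> good (\<lambda>t c. if P then f t c else g t c)"
  by (cases P) auto

definition gf :: "(complex \<Rightarrow> complex \<Rightarrow> complex fps) \<Rightarrow> bool" where
  "gf S \<longleftrightarrow> (\<forall>n. good (\<lambda>t c. fps_nth (S t c) n))"

lemma gf_good[simp]: "gf S \<Longrightarrow> good (\<lambda>t c. fps_nth (S t c) n)"
  unfolding gf_def by blast

lemma gfI: "(\<And>n. good (\<lambda>t c. fps_nth (S t c) n)) \<Longrightarrow> gf S"
  unfolding gf_def by blast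

lemma gf_cong: "(\<And>t c. (t, c) \<in> U \<Longrightarrow> S t c = T t c) \<Longrightarrow> gf T \<Longrightarrow> gf S"
  unfolding gf_def by (auto intro: good_eqI)

lemma gf_add[simp]: "gf S \<Longrightarrow> gf T \<Longrightarrow> gf (\<lambda>t c. S t c + T t c)"
  by (rule gfI) simp
lemma gf_diff[simp]: "gf S \<Longrightarrow> gf T \<Longrightarrow> gf (\<lambda>t c. S t c - T t c)"
  by (rule gfI) simp
lemma gf_minus[simp]: "gf S \<Longrightarrow> gf (\<lambda>t c. - S t c)"
  by (rule gfI) simp
lemma gf_mult[simp]: "gf S \<Longrightarrow> gf T \<Longrightarrow> gf (\<lambda>t c. S t c * T t c)"
  by (rule gfI) (simp add: fps_mult_nth)
lemma gf_pow[simp]: "gf S \<Longrightarrow> gf (\<lambda>t c. S t c ^ n)"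
proof (induction n)
  case 0 show ?case by (rule gfI) (simp add: fps_one_nth)
next
  case (Suc n) then show ?case using gf_mult[of S "\<lambda>t c. S t c ^ n"] by simp
qed
lemma gf_fconst[simp]: "good f \<Longrightarrow> gf (\<lambda>t c. fps_const (f t c))"
  by (rule gfI) simp
lemma gf_K[simp]: "gf (\<lambda>t c. K)"
  by (rule gfI) simp
lemma gf_chalf[simp]: "gf (\<lambda>t c. chalf c)"
proof (rule gfI)
  fix n
  have e: "(\<lambda>t c. fps_nth (chalf c) n) = (\<lambda>t c. (if n = 0 then c else if n = 1 then - 1/2 else 0))"
    by (auto simp: chalf_def)
  show "good (\<lambda>t c. fps_nth (chalf c) n)" unfolding e by (intro good_if good_const good_cv)
qed

lemma gf_inverse[simp]:
  assumes "gf S" "\<forall>t c. (t, c) \<in> U \<longrightarrow> fps_nth (S t c) 0 \<noteq> 0"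
  shows "gf (\<lambda>t c. inverse (S t c))"
proof (rule gfI)
  fix n show "good (\<lambda>t c. fps_nth (inverse (S t c)) n)"
  proof (induction n rule: less_induct)
    case (less n)
    show ?case
    proof (cases n)
      case 0
      then show ?thesis using assms by (simp add: fps_inverse_def)
    next
      case (Suc m)
      have e: "(\<lambda>t c. fps_nth (inverse (S t c)) n) =
        (\<lambda>t c. - inverse (fps_nth (S t c) 0) * (\<Sum>i\<in>{1..n}. fps_nth (S t c) i * fps_nth (inverse (S t c)) (n - i)))"
        using Suc by (simp add: fps_inverse_def)
      have "good (\<lambda>t c. inverse (fps_nth (S t c) 0))" using assms by simp
      moreover have "good (\<lambda>t c. \<Sum>i\<in>{1..n}. fps_nth (S t c) i * fps_nth (inverse (S t c)) (n - i))"
        using less Suc assms(1) by (intro good_sum good_mul) auto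
      ultimately show ?thesis unfolding e by simp
    qed
  qed
qed

lemma fdt_nth: "fps_nth (fdt S t c) n = Dt (\<lambda>t c. fps_nth (S t c) n) t c"
  by (simp add: fdt_def Dt_def)

lemma gf_fdt[simp]: "gf S \<Longrightarrow> gf (fdt S)"
proof (rule gfI)
  fix n assume "gf S"
  have "(\<lambda>t c. fps_nth (fdt S t c) n) = Dt (\<lambda>t c. fps_nth (S t c) n)"
    by (intro ext) (simp add: fdt_nth)
  then show "good (\<lambda>t c. fps_nth (fdt S t c) n)" using \<open>gf S\<close> by simp
qed

lemma fdt_cong: "(\<And>t c. (t, c) \<in> U \<Longrightarrow> S t c = T t c) \<Longrightarrow> (t, c) \<in> U \<Longrightarrow> fdt S t c = fdt T t c"
  unfolding fps_eq_iff fdt_nth by (auto intro!: Dt_congI)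

lemma fdt_add[simp]: "gf S \<Longrightarrow> gf T \<Longrightarrow> (t, c) \<in> U \<Longrightarrow> fdt (\<lambda>t c. S t c + T t c) t c = fdt S t c + fdt T t c"
  by (simp add: fps_eq_iff fdt_nth)
lemma fdt_diff[simp]: "gf S \<Longrightarrow> gf T \<Longrightarrow> (t, c) \<in> U \<Longrightarrow> fdt (\<lambda>t c. S t c - T t c) t c = fdt S t c - fdt T t c"
  by (simp add: fps_eq_iff fdt_nth)
lemma fdt_minus[simp]: "gf S \<Longrightarrow> (t, c) \<in> U \<Longrightarrow> fdt (\<lambda>t c. - S t c) t c = - fdt S t c"
  by (simp add: fps_eq_iff fdt_nth)
lemma fdt_mult[simp]: "gf S \<Longrightarrow> gf T \<Longrightarrow> (t, c) \<in> U \<Longrightarrow> fdt (\<lambda>t c. S t c * T t c) t c = fdt S t c * T t c + S t c * fdt T t c"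
  by (simp add: fps_eq_iff fdt_nth fps_mult_nth sum.distrib)
lemma fdt_fconst[simp]: "good f \<Longrightarrow> (t, c) \<in> U \<Longrightarrow> fdt (\<lambda>t c. fps_const (f t c)) t c = fps_const (Dt f t c)"
  by (simp add: fps_eq_iff fdt_nth)
lemma fdt_cfun[simp]: "fdt (\<lambda>t c. F c) t c = 0"
  by (simp add: fps_eq_iff fdt_nth)


lemma fdt_inverse[simp]:
  assumes "gf S" "\<forall>t c. (t, c) \<in> U \<longrightarrow> fps_nth (S t c) 0 \<noteq> 0" "(t, c) \<in> U"
  shows "fdt (\<lambda>t c. inverse (S t c)) t c = - fdt S t c * inverse (S t c) ^ 2"
proof -
  have gi: "gf (\<lambda>t c. inverse (S t c))" using assms by simp
  have "fdt (\<lambda>t c. S t c * inverse (S t c)) t c = fdt (\<lambda>t c. 1) t c"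
    by (rule fdt_cong) (use assms in \<open>auto intro: inverse_mult_eq_1'\<close>)
  also have "\<dots> = 0" by simp
  finally have "fdt S t c * inverse (S t c) + S t c * fdt (\<lambda>t c. inverse (S t c)) t c = 0"
    using assms gi by simp
  then have "inverse (S t c) * (fdt S t c * inverse (S t c) + S t c * fdt (\<lambda>t c. inverse (S t c)) t c) = 0"
    by simp
  moreover have "inverse (S t c) * S t c = 1" using assms by (auto intro: inverse_mult_eq_1)
  ultimately show ?thesis
    by (simp add: algebra_simps power2_eq_square) (metis add.inverse_unique mult.assoc mult.commute mult.left_neutral)
qed

lemma fdt_pow[simp]:
  assumes "gf S" "(t, c) \<in> U"
  shows "fdt (\<lambda>t c. S t c ^ n) t c = of_nat n * S t c ^ (n - 1) * fdt S t c"
proof (induction n)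
  case 0 then show ?case by simp
next
  case (Suc n)
  have "fdt (\<lambda>t c. S t c ^ Suc n) t c = fdt (\<lambda>t c. S t c * S t c ^ n) t c" by simp
  also have "\<dots> = fdt S t c * S t c ^ n + S t c * (of_nat n * S t c ^ (n - 1) * fdt S t c)"
    using assms Suc by simp
  also have "\<dots> = of_nat (Suc n) * S t c ^ n * fdt S t c"
    by (cases n) (simp_all add: algebra_simps)
  finally show ?case by simp
qed

definition W :: "(complex \<Rightarrow> complex \<Rightarrow> complex fps) \<Rightarrow> complex \<Rightarrow> complex \<Rightarrow> complex fps" where
  "W S t c = fps_X * fdt S t c"

lemma W_cong: "(\<And>t c. (t, c) \<in> U \<Longrightarrow> S t c = T t c) \<Longrightarrow> (t, c) \<in> U \<Longrightarrow> W S t c = W T t c"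
  unfolding W_def using fdt_cong by metis
lemma W_add[simp]: "gf S \<Longrightarrow> gf T \<Longrightarrow> (t, c) \<in> U \<Longrightarrow> W (\<lambda>t c. S t c + T t c) t c = W S t c + W T t c"
  by (simp add: W_def algebra_simps)
lemma W_diff[simp]: "gf S \<Longrightarrow> gf T \<Longrightarrow> (t, c) \<in> U \<Longrightarrow> W (\<lambda>t c. S t c - T t c) t c = W S t c - W T t c"
  by (simp add: W_def algebra_simps)
lemma W_minus[simp]: "gf S \<Longrightarrow> (t, c) \<in> U \<Longrightarrow> W (\<lambda>t c. - S t c) t c = - W S t c"
  by (simp add: W_def algebra_simps)
lemma W_mult[simp]: "gf S \<Longrightarrow> gf T \<Longrightarrow> (t, c) \<in> U \<Longrightarrow> W (\<lambda>t c. S t c * T t c) t c = W S t c * T t c + S t c * W T t c"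
  by (simp add: W_def algebra_simps)
lemma W_pow[simp]: "gf S \<Longrightarrow> (t, c) \<in> U \<Longrightarrow> W (\<lambda>t c. S t c ^ n) t c = of_nat n * S t c ^ (n - 1) * W S t c"
  by (simp add: W_def algebra_simps)
lemma W_inverse[simp]: "gf S \<Longrightarrow> \<forall>t c. (t, c) \<in> U \<longrightarrow> fps_nth (S t c) 0 \<noteq> 0 \<Longrightarrow> (t, c) \<in> U \<Longrightarrow>
   W (\<lambda>t c. inverse (S t c)) t c = - W S t c * inverse (S t c) ^ 2"
  by (simp add: W_def algebra_simps)
lemma W_fconst[simp]: "good f \<Longrightarrow> (t, c) \<in> U \<Longrightarrow> W (\<lambda>t c. fps_const (f t c)) t c = fps_X * fps_const (Dt f t c)"
  by (simp add: W_def)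
lemma W_cfun[simp]: "W (\<lambda>t c. F c) t c = 0"
  by (simp add: W_def)

lemma mult_nth_low:
  fixes a b :: "complex fps"
  assumes "\<forall>i<m. fps_nth a i = 0"
  shows "fps_nth (a * b) m = fps_nth a m * fps_nth b 0"
proof -
  have "fps_nth (a * b) m = (\<Sum>i=0..m. fps_nth a i * fps_nth b (m - i))" by (rule fps_mult_nth)
  also have "\<dots> = (\<Sum>i\<in>{m}. fps_nth a i * fps_nth b (m - i))"
    by (rule sum.mono_neutral_right) (use assms in auto)
  finally show ?thesis by simp
qed

lemma cube_diff:
  fixes a b :: "complex fps"
  assumes "\<forall>i\<le>k. fps_nth a i = fps_nth b i"
  shows "fps_nth (a ^ 3) (Suc k) - fps_nth (b ^ 3) (Suc k) = 3 * fps_nth a 0 ^ 2 * (fps_nth a (Suc k) - fps_nth b (Suc k))"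
proof -
  have e: "a ^ 3 - b ^ 3 = (a - b) * (a ^ 2 + a * b + b ^ 2)"
    by (simp add: algebra_simps power2_eq_square power3_eq_cube)
  have "fps_nth ((a - b) * (a ^ 2 + a * b + b ^ 2)) (Suc k) = fps_nth (a - b) (Suc k) * fps_nth (a ^ 2 + a * b + b ^ 2) 0"
    by (rule mult_nth_low) (use assms in auto)
  moreover have "fps_nth b 0 = fps_nth a 0" using assms by auto
  ultimately show ?thesis
    by (simp add: e[symmetric] power2_eq_square power3_eq_cube algebra_simps)
qed

lemma square_diff:
  fixes a b :: "complex fps"
  assumes "\<forall>i\<le>k. fps_nth a i = fps_nth b i"
  shows "fps_nth (a ^ 2) (Suc k) - fps_nth (b ^ 2) (Suc k) = 2 * fps_nth a 0 * (fps_nth a (Suc k) - fps_nth b (Suc k))"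
proof -
  have e: "a ^ 2 - b ^ 2 = (a - b) * (a + b)"
    by (simp add: algebra_simps power2_eq_square)
  have "fps_nth ((a - b) * (a + b)) (Suc k) = fps_nth (a - b) (Suc k) * fps_nth (a + b) 0"
    by (rule mult_nth_low) (use assms in auto)
  moreover have "fps_nth b 0 = fps_nth a 0" using assms by auto
  ultimately show ?thesis
    by (simp add: e[symmetric] power2_eq_square algebra_simps)
qed

end




locale PII2 = PII +
  fixes lam nu Rt :: "complex \<Rightarrow> complex \<Rightarrow> complex fps"
  assumes zp: "zero_param_solution U l0 lam nu"
    and rs: "riccati_solution U sq lam Rt"
begin

lemma lam0[simp]: "(t, c) \<in> U \<Longrightarrow> fps_nth (lam t c) 0 = l0 t c"
  using zp unfolding zero_param_solution_def by auto
lemma nu0[simp]: "(t, c) \<in> U \<Longrightarrow> fps_nth (nu t c) 0 = 0"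
  using zp unfolding zero_param_solution_def by auto
lemma eq1: "(t, c) \<in> U \<Longrightarrow> fps_X * fdt lam t c = nu t c"
  using zp unfolding zero_param_solution_def by auto
lemma eq2: "(t, c) \<in> U \<Longrightarrow> fps_X * fdt nu t c = fps_const 2 * lam t c ^ 3 + fps_const t * lam t c + fps_const c"
  using zp unfolding zero_param_solution_def by auto
lemma R0[simp]: "(t, c) \<in> U \<Longrightarrow> fps_nth (Rt t c) 0 = sq t c"
  using rs unfolding riccati_solution_def by auto
lemma eqR: "(t, c) \<in> U \<Longrightarrow> Rt t c ^ 2 + fps_X * fdt Rt t c = fps_const 6 * lam t c ^ 2 + fps_const t"
  using rs unfolding riccati_solution_def by auto

definition trnc :: "(complex \<Rightarrow> complex \<Rightarrow> complex fps) \<Rightarrow> nat \<Rightarrow> complex \<Rightarrow> complex \<Rightarrow> complex fps" where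
  "trnc S k t c = Abs_fps (\<lambda>i. if i \<le> k then fps_nth (S t c) i else 0)"

lemma trnc_nth[simp]: "fps_nth (trnc S k t c) i = (if i \<le> k then fps_nth (S t c) i else 0)"
  by (simp add: trnc_def)

lemma gf_trunc: "(\<And>i. i \<le> k \<Longrightarrow> good (\<lambda>t c. fps_nth (S t c) i)) \<Longrightarrow> gf (trnc S k)"
proof (rule gfI)
  fix n assume a: "\<And>i. i \<le> k \<Longrightarrow> good (\<lambda>t c. fps_nth (S t c) i)"
  show "good (\<lambda>t c. fps_nth (trnc S k t c) n)"
    by (cases "n \<le> k") (simp_all add: a)
qed

lemma good_lam_nu: "good (\<lambda>t c. fps_nth (lam t c) k) \<and> good (\<lambda>t c. fps_nth (nu t c) k)"
proof (induction k rule: less_induct)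
  case (less n)
  show ?case
  proof (cases n)
    case 0
    show ?thesis unfolding 0
    proof
      show "good (\<lambda>t c. fps_nth (lam t c) 0)" by (rule good_eqI[of _ l0]) auto
      show "good (\<lambda>t c. fps_nth (nu t c) 0)" by (rule good_eqI[of _ "\<lambda>t c. 0"]) auto
    qed
  next
    case (Suc k)
    have IH: "good (\<lambda>t c. fps_nth (lam t c) i)" "good (\<lambda>t c. fps_nth (nu t c) i)" if "i \<le> k" for i
      using less Suc that by auto
    have gP: "gf (trnc lam k)" using IH by (intro gf_trunc) auto
    have nuS: "fps_nth (nu t c) (Suc k) = Dt (\<lambda>t c. fps_nth (lam t c) k) t c" if "(t, c) \<in> U" for t c
    proof -
      have "fps_nth (nu t c) (Suc k) = fps_nth (fps_X * fdt lam t c) (Suc k)" using eq1[OF that] by simp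
      also have "\<dots> = fps_nth (fdt lam t c) k" by simp
      also have "\<dots> = Dt (\<lambda>t c. fps_nth (lam t c) k) t c" by (rule fdt_nth)
      finally show ?thesis .
    qed
    have lamS: "fps_nth (lam t c) (Suc k) =
       (Dt (\<lambda>t c. fps_nth (nu t c) k) t c - 2 * fps_nth (trnc lam k t c ^ 3) (Suc k)) / Del t c"
      if "(t, c) \<in> U" for t c
    proof -
      have "Dt (\<lambda>t c. fps_nth (nu t c) k) t c = fps_nth (fdt nu t c) k" by (rule fdt_nth[symmetric])
      also have "\<dots> = fps_nth (fps_X * fdt nu t c) (Suc k)" by simp
      also have "\<dots> = 2 * fps_nth (lam t c ^ 3) (Suc k) + t * fps_nth (lam t c) (Suc k)"
        using eq2[OF that] by simp
      finally have A: "Dt (\<lambda>t c. fps_nth (nu t c) k) t c = 2 * fps_nth (lam t c ^ 3) (Suc k) + t * fps_nth (lam t c) (Suc k)" .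
      have "fps_nth (lam t c ^ 3) (Suc k) - fps_nth (trnc lam k t c ^ 3) (Suc k) =
          3 * fps_nth (lam t c) 0 ^ 2 * (fps_nth (lam t c) (Suc k) - fps_nth (trnc lam k t c) (Suc k))"
        by (rule cube_diff) simp
      then have B: "fps_nth (lam t c ^ 3) (Suc k) = fps_nth (trnc lam k t c ^ 3) (Suc k) + 3 * l0 t c ^ 2 * fps_nth (lam t c) (Suc k)"
        using that by (simp add: algebra_simps)
      have "fps_nth (lam t c) (Suc k) * Del t c = Dt (\<lambda>t c. fps_nth (nu t c) k) t c - 2 * fps_nth (trnc lam k t c ^ 3) (Suc k)"
        unfolding A B by (simp add: Del_def algebra_simps)
      then show ?thesis using that by (simp add: field_simps)
    qed
    show ?thesis unfolding Suc
    proof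
      show "good (\<lambda>t c. fps_nth (lam t c) (Suc k))"
        by (rule good_eqI[OF lamS]) (use IH gP in auto)
      show "good (\<lambda>t c. fps_nth (nu t c) (Suc k))"
        by (rule good_eqI[OF nuS]) (use IH in auto)
    qed
  qed
qed

lemma gf_lam[simp]: "gf lam" and gf_nu[simp]: "gf nu"
  using good_lam_nu by (auto intro: gfI)

lemma good_Rt: "good (\<lambda>t c. fps_nth (Rt t c) k)"
proof (induction k rule: less_induct)
  case (less n)
  show ?case
  proof (cases n)
    case 0
    show ?thesis unfolding 0
      by (rule good_eqI[of _ sq]) auto
  next
    case (Suc k)
    have IH: "good (\<lambda>t c. fps_nth (Rt t c) i)" if "i \<le> k" for i
      using less Suc that by auto
    have gP: "gf (trnc Rt k)" using IH by (intro gf_trunc) auto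
    have RS: "fps_nth (Rt t c) (Suc k) =
       (6 * fps_nth (lam t c ^ 2) (Suc k) - Dt (\<lambda>t c. fps_nth (Rt t c) k) t c - fps_nth (trnc Rt k t c ^ 2) (Suc k)) / (2 * sq t c)"
      if "(t, c) \<in> U" for t c
    proof -
      have "fps_nth (Rt t c ^ 2) (Suc k) + Dt (\<lambda>t c. fps_nth (Rt t c) k) t c = fps_nth (Rt t c ^ 2) (Suc k) + fps_nth (fdt Rt t c) k"
        by (simp only: fdt_nth)
      also have "\<dots> = fps_nth (Rt t c ^ 2 + fps_X * fdt Rt t c) (Suc k)" by simp
      also have "\<dots> = 6 * fps_nth (lam t c ^ 2) (Suc k)"
        using eqR[OF that] by simp
      finally have A: "fps_nth (Rt t c ^ 2) (Suc k) + Dt (\<lambda>t c. fps_nth (Rt t c) k) t c = 6 * fps_nth (lam t c ^ 2) (Suc k)" .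
      have "fps_nth (Rt t c ^ 2) (Suc k) - fps_nth (trnc Rt k t c ^ 2) (Suc k) =
          2 * fps_nth (Rt t c) 0 * (fps_nth (Rt t c) (Suc k) - fps_nth (trnc Rt k t c) (Suc k))"
        by (rule square_diff) simp
      then have B: "fps_nth (Rt t c ^ 2) (Suc k) = fps_nth (trnc Rt k t c ^ 2) (Suc k) + 2 * sq t c * fps_nth (Rt t c) (Suc k)"
        using that by (simp add: algebra_simps)
      have "fps_nth (Rt t c) (Suc k) * (2 * sq t c) = 6 * fps_nth (lam t c ^ 2) (Suc k) - Dt (\<lambda>t c. fps_nth (Rt t c) k) t c - fps_nth (trnc Rt k t c ^ 2) (Suc k)"
        using A unfolding B by (simp add: algebra_simps)
      then show ?thesis using that by (simp add: field_simps)
    qed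
    show ?thesis unfolding Suc
      by (rule good_eqI[OF RS]) (use IH gP in auto)
  qed
qed

lemma gf_Rt[simp]: "gf Rt"
  using good_Rt by (auto intro: gfI)

end



lemma pascal_sum:
  fixes F G :: "nat \<Rightarrow> 'a::comm_semiring_1"
  shows "(\<Sum>a\<le>m. of_nat (m choose a) * (F (Suc a) * G (m - a) + F a * G (Suc (m - a)))) =
         (\<Sum>a\<le>Suc m. of_nat (Suc m choose a) * (F a * G (Suc m - a)))"
proof -
  have L2: "(\<Sum>a\<le>m. of_nat (m choose a) * (F a * G (Suc (m - a)))) =
            (\<Sum>a\<le>Suc m. of_nat (m choose a) * (F a * G (Suc m - a)))"
    by (simp add: sum.atMost_Suc binomial_eq_0) (rule sum.cong; simp add: Suc_diff_le)
  also have "\<dots> = F 0 * G (Suc m) + (\<Sum>a\<le>m. of_nat (m choose Suc a) * (F (Suc a) * G (m - a)))"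
    by (subst sum.atMost_Suc_shift) (simp del: sum.atMost_Suc)
  finally have L2': "(\<Sum>a\<le>m. of_nat (m choose a) * (F a * G (Suc (m - a)))) =
      F 0 * G (Suc m) + (\<Sum>a\<le>m. of_nat (m choose Suc a) * (F (Suc a) * G (m - a)))" .
  have R: "(\<Sum>a\<le>Suc m. of_nat (Suc m choose a) * (F a * G (Suc m - a))) =
      F 0 * G (Suc m) + (\<Sum>a\<le>m. of_nat (m choose a) * (F (Suc a) * G (m - a)))
        + (\<Sum>a\<le>m. of_nat (m choose Suc a) * (F (Suc a) * G (m - a)))"
    by (subst sum.atMost_Suc_shift) (simp del: sum.atMost_Suc add: sum.distrib algebra_simps)
  have "(\<Sum>a\<le>m. of_nat (m choose a) * (F (Suc a) * G (m - a) + F a * G (Suc (m - a)))) =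
     (\<Sum>a\<le>m. of_nat (m choose a) * (F (Suc a) * G (m - a))) + (\<Sum>a\<le>m. of_nat (m choose a) * (F a * G (Suc (m - a))))"
    by (simp add: distrib_left sum.distrib)
  also have "\<dots> = (\<Sum>a\<le>m. of_nat (m choose a) * (F (Suc a) * G (m - a))) +
      (F 0 * G (Suc m) + (\<Sum>a\<le>m. of_nat (m choose Suc a) * (F (Suc a) * G (m - a))))"
    by (simp only: L2')
  also have "\<dots> = (\<Sum>a\<le>Suc m. of_nat (Suc m choose a) * (F a * G (Suc m - a)))"
    by (simp only: R add_ac)
  finally show ?thesis .
qed

context PII begin

definition DcN :: "nat \<Rightarrow> (complex \<Rightarrow> complex \<Rightarrow> complex) \<Rightarrow> complex \<Rightarrow> complex \<Rightarrow> complex" where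
  "DcN m f = (\<lambda>t c. (deriv ^^ m) (\<lambda>d. f t d) c)"

lemma DcN_0[simp]: "DcN 0 f = f"
  by (simp add: DcN_def)

lemma DcN_Suc: "DcN (Suc m) f = Dc (DcN m f)"
  by (simp add: DcN_def Dc_def)

lemma good_DcN[simp]: "good f \<Longrightarrow> good (DcN m f)"
  by (induction m) (simp_all add: DcN_Suc)

lemma DcN_congI: "(\<And>t c. (t, c) \<in> U \<Longrightarrow> f t c = g t c) \<Longrightarrow> (t, c) \<in> U \<Longrightarrow> DcN m f t c = DcN m g t c"
  unfolding DcN_def by (rule higher_deriv_cong_ev) (auto elim!: eventually_mono[OF evc])

lemma DcN_Dt: "good f \<Longrightarrow> (t, c) \<in> U \<Longrightarrow> DcN m (Dt f) t c = Dt (DcN m f) t c"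
proof (induction m arbitrary: t c)
  case 0 then show ?case by simp
next
  case (Suc m)
  have "DcN (Suc m) (Dt f) t c = Dc (DcN m (Dt f)) t c" by (simp add: DcN_Suc)
  also have "\<dots> = Dc (Dt (DcN m f)) t c"
    by (rule Dc_congI) (use Suc in auto)
  also have "\<dots> = Dt (Dc (DcN m f)) t c"
    using good_comm[of "DcN m f" t c] Suc by simp
  finally show ?case by (simp add: DcN_Suc)
qed

lemma DcN_zero[simp]: "DcN m (\<lambda>t c. 0) = (\<lambda>t c. 0)"
  by (induction m) (simp_all add: DcN_Suc Dc_def)

lemma DcN_tfun: "DcN (Suc m) (\<lambda>t c. F t) = (\<lambda>t c. 0)"
  by (induction m) (simp_all add: DcN_Suc Dc_def)

lemma DcN_cv: "DcN (Suc (Suc m)) (\<lambda>t c. c) = (\<lambda>t c. 0)"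
proof -
  have "DcN (Suc 0) (\<lambda>t c. c) = (\<lambda>t c. 1)" by (simp add: DcN_Suc Dc_def)
  then have "DcN (Suc (Suc 0)) (\<lambda>t c. c) = (\<lambda>t c. 0)" by (simp add: DcN_Suc Dc_def)
  then show ?thesis
    by (induction m) (simp_all add: DcN_Suc Dc_def)
qed

lemma DcN_cv1: "DcN (Suc 0) (\<lambda>t c. c) = (\<lambda>t c. 1)"
  by (simp add: DcN_Suc Dc_def)

definition Dcf :: "(complex \<Rightarrow> complex \<Rightarrow> complex fps) \<Rightarrow> complex \<Rightarrow> complex \<Rightarrow> complex fps" where
  "Dcf S = (\<lambda>t c. Abs_fps (\<lambda>n. Dc (\<lambda>t c. fps_nth (S t c) n) t c))"

lemma Dcf_nth: "fps_nth (Dcf S t c) n = Dc (\<lambda>t c. fps_nth (S t c) n) t c"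
  by (simp add: Dcf_def)

lemma Dcfp_fun: "(\<lambda>t c. fps_nth ((Dcf ^^ m) S t c) n) = DcN m (\<lambda>t c. fps_nth (S t c) n)"
proof (induction m)
  case 0 then show ?case by simp
next
  case (Suc m)
  have "(\<lambda>t c. fps_nth ((Dcf ^^ Suc m) S t c) n) = (\<lambda>t c. Dc (\<lambda>t c. fps_nth ((Dcf ^^ m) S t c) n) t c)"
    by (simp add: Dcf_nth)
  also have "\<dots> = Dc (DcN m (\<lambda>t c. fps_nth (S t c) n))"
    unfolding Suc by simp
  finally show ?case by (simp add: DcN_Suc)
qed

lemma Dcfp_nth: "fps_nth ((Dcf ^^ m) S t c) n = DcN m (\<lambda>t c. fps_nth (S t c) n) t c"
  using Dcfp_fun[of m S n] by metis

lemma gf_Dcfp[simp]: "gf S \<Longrightarrow> gf ((Dcf ^^ m) S)"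
  by (rule gfI) (simp add: Dcfp_fun)

lemma gf_Dcf[simp]: "gf S \<Longrightarrow> gf (Dcf S)"
  using gf_Dcfp[of S 1] by simp

lemma Dcf_cong: "(\<And>t c. (t, c) \<in> U \<Longrightarrow> S t c = T t c) \<Longrightarrow> (t, c) \<in> U \<Longrightarrow> Dcf S t c = Dcf T t c"
  unfolding fps_eq_iff Dcf_nth by (auto intro!: Dc_congI)

lemma Dcf_add[simp]: "gf S \<Longrightarrow> gf T \<Longrightarrow> (t, c) \<in> U \<Longrightarrow> Dcf (\<lambda>t c. S t c + T t c) t c = Dcf S t c + Dcf T t c"
  by (simp add: fps_eq_iff Dcf_nth)
lemma Dcf_mult[simp]: "gf S \<Longrightarrow> gf T \<Longrightarrow> (t, c) \<in> U \<Longrightarrow> Dcf (\<lambda>t c. S t c * T t c) t c = Dcf S t c * T t c + S t c * Dcf T t c"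
  by (simp add: fps_eq_iff Dcf_nth fps_mult_nth sum.distrib)
lemma Dcf_tfun[simp]: "Dcf (\<lambda>t c. F t) t c = 0"
  by (simp add: fps_eq_iff Dcf_nth)
lemma Dcf_sum: "finite A \<Longrightarrow> (\<And>i. i \<in> A \<Longrightarrow> gf (S i)) \<Longrightarrow> (t, c) \<in> U \<Longrightarrow>
   Dcf (\<lambda>t c. \<Sum>i\<in>A. S i t c) t c = (\<Sum>i\<in>A. Dcf (S i) t c)"
  by (simp add: fps_eq_iff Dcf_nth fps_sum_nth)


lemma Dcf_leib:
  assumes "gf S" "gf T"
  shows "(t, c) \<in> U \<Longrightarrow> (Dcf ^^ m) (\<lambda>t c. S t c * T t c) t c =
     (\<Sum>a\<le>m. of_nat (m choose a) * ((Dcf ^^ a) S t c * (Dcf ^^ (m - a)) T t c))"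
proof (induction m arbitrary: t c)
  case 0 show ?case by simp
next
  case (Suc m)
  have "(Dcf ^^ Suc m) (\<lambda>t c. S t c * T t c) t c = Dcf ((Dcf ^^ m) (\<lambda>t c. S t c * T t c)) t c" by simp
  also have "\<dots> = Dcf (\<lambda>t c. \<Sum>a\<le>m. of_nat (m choose a) * ((Dcf ^^ a) S t c * (Dcf ^^ (m - a)) T t c)) t c"
    by (rule Dcf_cong) (use Suc in auto)
  also have "\<dots> = (\<Sum>a\<le>m. Dcf (\<lambda>t c. of_nat (m choose a) * ((Dcf ^^ a) S t c * (Dcf ^^ (m - a)) T t c)) t c)"
    by (rule Dcf_sum) (use assms Suc in auto)
  also have "\<dots> = (\<Sum>a\<le>m. of_nat (m choose a) * ((Dcf ^^ Suc a) S t c * (Dcf ^^ (m - a)) T t c +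
        (Dcf ^^ a) S t c * (Dcf ^^ Suc (m - a)) T t c))"
    by (rule sum.cong) (use assms Suc in \<open>simp_all add: algebra_simps\<close>)
  also have "\<dots> = (\<Sum>a\<le>Suc m. of_nat (Suc m choose a) * ((Dcf ^^ a) S t c * (Dcf ^^ (Suc m - a)) T t c))"
    using pascal_sum[of m "\<lambda>a. (Dcf ^^ a) S t c" "\<lambda>b. (Dcf ^^ b) T t c"] by simp
  finally show ?case .
qed

definition ca :: "nat \<Rightarrow> complex" where "ca m = (-1) ^ m / fact m"

definition Tay :: "nat \<Rightarrow> (complex \<Rightarrow> complex \<Rightarrow> complex fps) \<Rightarrow> complex \<Rightarrow> complex \<Rightarrow> complex fps" where
  "Tay N S t c = (\<Sum>m\<le>N. fps_const (ca m) * (fps_X ^ m * (Dcf ^^ m) S t c))"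

lemma cshift_nth: "fps_nth (cshift S t c) k = (\<Sum>m\<le>k. ca m * fps_nth ((Dcf ^^ m) S t c) (k - m))"
  by (simp add: cshift_def ca_def Dcfp_nth DcN_def)

lemma cshift_nth': "fps_nth (cshift S t c) k = (\<Sum>m\<le>k. ca m * DcN m (\<lambda>t c. fps_nth (S t c) (k - m)) t c)"
  by (simp add: cshift_nth Dcfp_nth)

lemma Tay_nth: assumes "k \<le> N" shows "fps_nth (Tay N S t c) k = fps_nth (cshift S t c) k"
proof -
  have "fps_nth (Tay N S t c) k = (\<Sum>m\<le>N. ca m * (if k < m then 0 else fps_nth ((Dcf ^^ m) S t c) (k - m)))"
    by (simp add: Tay_def fps_sum_nth fps_X_power_mult_nth)
  also have "\<dots> = (\<Sum>m\<le>k. ca m * (if k < m then 0 else fps_nth ((Dcf ^^ m) S t c) (k - m)))"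
    by (rule sum.mono_neutral_right) (use assms in auto)
  also have "\<dots> = (\<Sum>m\<le>k. ca m * fps_nth ((Dcf ^^ m) S t c) (k - m))"
    by (rule sum.cong) auto
  finally show ?thesis by (simp add: cshift_nth)
qed

lemma ca_binom: assumes "i \<le> m" shows "ca m * of_nat (m choose i) = ca i * ca (m - i)"
proof -
  have p: "(-1::complex) ^ m = (-1) ^ i * (-1) ^ (m - i)"
    using assms by (metis le_add_diff_inverse power_add)
  show ?thesis unfolding ca_def p using assms
    by (simp add: binomial_fact field_simps)
qed

lemma cshift_mult:
  assumes "gf S" "gf T" "(t, c) \<in> U"
  shows "cshift (\<lambda>t c. S t c * T t c) t c = cshift S t c * cshift T t c"
proof (rule fps_ext)
  fix k
  define A where "A a = (Dcf ^^ a) S t c" for a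
  define B where "B b = (Dcf ^^ b) T t c" for b
  define g where "g a b = fps_const (ca a * ca b) * (fps_X ^ (a + b) * (A a * B b))" for a b
  have 1: "fps_nth (cshift S t c * cshift T t c) k = fps_nth (Tay k S t c * Tay k T t c) k"
    unfolding fps_mult_nth by (rule sum.cong) (simp_all add: Tay_nth)
  have 2: "Tay k S t c * Tay k T t c = (\<Sum>a\<le>k. \<Sum>b\<le>k. g a b)"
    unfolding Tay_def sum_product g_def A_def B_def
    by (rule sum.cong[OF refl], rule sum.cong[OF refl]) (simp only: power_add fps_const_mult[symmetric] mult_ac)
  have 3: "Tay k (\<lambda>t c. S t c * T t c) t c = (\<Sum>m\<le>k. \<Sum>a\<le>m. g a (m - a))"
    unfolding Tay_def
  proof (rule sum.cong[OF refl])
    fix m assume "m \<in> {..k}"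
    have "fps_const (ca m) * (fps_X ^ m * (Dcf ^^ m) (\<lambda>t c. S t c * T t c) t c) =
       fps_const (ca m) * (fps_X ^ m * (\<Sum>a\<le>m. of_nat (m choose a) * (A a * B (m - a))))"
      using Dcf_leib[OF assms(1,2) assms(3)] unfolding A_def B_def by simp
    also have "\<dots> = (\<Sum>a\<le>m. fps_const (ca m) * (fps_X ^ m * (of_nat (m choose a) * (A a * B (m - a)))))"
      by (simp add: sum_distrib_left)
    also have "\<dots> = (\<Sum>a\<le>m. g a (m - a))"
    proof (rule sum.cong[OF refl])
      fix a assume "a \<in> {..m}"
      then have am: "a \<le> m" by simp
      have "fps_const (ca m) * (fps_X ^ m * (of_nat (m choose a) * (A a * B (m - a)))) =
          fps_const (ca m * of_nat (m choose a)) * (fps_X ^ m * (A a * B (m - a)))"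
        by (simp only: fps_of_nat[symmetric] fps_const_mult[symmetric] mult_ac)
      also have "\<dots> = g a (m - a)" unfolding g_def using am by (simp add: ca_binom)
      finally show "fps_const (ca m) * (fps_X ^ m * (of_nat (m choose a) * (A a * B (m - a)))) = g a (m - a)" .
    qed
    finally show "fps_const (ca m) * (fps_X ^ m * (Dcf ^^ m) (\<lambda>t c. S t c * T t c) t c) = (\<Sum>a\<le>m. g a (m - a))" .
  qed
  have 4: "(\<Sum>m\<le>k. \<Sum>a\<le>m. g a (m - a)) = (\<Sum>(a, b)\<in>{(a, b). a + b \<le> k}. g a b)"
    using sum.triangle_reindex_eq[of g k] by simp
  have 5: "fps_nth (\<Sum>a\<le>k. \<Sum>b\<le>k. g a b) k = fps_nth (\<Sum>(a, b)\<in>{(a, b). a + b \<le> k}. g a b) k"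
  proof -
    have "(\<Sum>a\<le>k. \<Sum>b\<le>k. g a b) = (\<Sum>(a, b)\<in>{..k} \<times> {..k}. g a b)"
      by (simp add: sum.cartesian_product)
    then have "fps_nth (\<Sum>a\<le>k. \<Sum>b\<le>k. g a b) k = (\<Sum>(a, b)\<in>{..k} \<times> {..k}. fps_nth (g a b) k)"
      by (simp add: fps_sum_nth case_prod_unfold)
    also have "\<dots> = (\<Sum>(a, b)\<in>{(a, b). a + b \<le> k}. fps_nth (g a b) k)"
      by (rule sum.mono_neutral_right) (auto simp: g_def fps_X_power_mult_nth split: if_splits)
    also have "\<dots> = fps_nth (\<Sum>(a, b)\<in>{(a, b). a + b \<le> k}. g a b) k"
      by (simp add: fps_sum_nth case_prod_unfold)
    finally show ?thesis .
  qed
  have "fps_nth (cshift (\<lambda>t c. S t c * T t c) t c) k = fps_nth (Tay k (\<lambda>t c. S t c * T t c) t c) k"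
    by (simp add: Tay_nth)
  also have "\<dots> = fps_nth (cshift S t c * cshift T t c) k"
    unfolding 3 4 1 2 5 ..
  finally show "fps_nth (cshift (\<lambda>t c. S t c * T t c) t c) k = fps_nth (cshift S t c * cshift T t c) k" .
qed


lemma cshift_cong: "(\<And>t c. (t, c) \<in> U \<Longrightarrow> S t c = T t c) \<Longrightarrow> (t, c) \<in> U \<Longrightarrow> cshift S t c = cshift T t c"
  unfolding fps_eq_iff cshift_nth' by (auto intro!: sum.cong DcN_congI)

lemma DcN_add: "good f \<Longrightarrow> good g \<Longrightarrow> (t, c) \<in> U \<Longrightarrow> DcN m (\<lambda>t c. f t c + g t c) t c = DcN m f t c + DcN m g t c"
proof (induction m arbitrary: t c)
  case 0 then show ?case by simp
next
  case (Suc m)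
  have "DcN (Suc m) (\<lambda>t c. f t c + g t c) t c = Dc (DcN m (\<lambda>t c. f t c + g t c)) t c" by (simp add: DcN_Suc)
  also have "\<dots> = Dc (\<lambda>t c. DcN m f t c + DcN m g t c) t c"
    by (rule Dc_congI) (use Suc in auto)
  also have "\<dots> = DcN (Suc m) f t c + DcN (Suc m) g t c"
    using Suc by (simp add: DcN_Suc)
  finally show ?case .
qed

lemma cshift_add: "gf S \<Longrightarrow> gf T \<Longrightarrow> (t, c) \<in> U \<Longrightarrow> cshift (\<lambda>t c. S t c + T t c) t c = cshift S t c + cshift T t c"
  by (simp add: fps_eq_iff cshift_nth' DcN_add sum.distrib distrib_left)

lemma cshift_tfun: "cshift (\<lambda>t c. F t) t c = F t"
proof (rule fps_ext)
  fix k
  have "fps_nth (cshift (\<lambda>t c. F t) t c) k = (\<Sum>m\<le>k. ca m * DcN m (\<lambda>t c. fps_nth (F t) (k - m)) t c)"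
    by (rule cshift_nth')
  also have "\<dots> = (\<Sum>m\<in>{0}. ca m * DcN m (\<lambda>t c. fps_nth (F t) (k - m)) t c)"
  proof (rule sum.mono_neutral_right)
    show "\<forall>i\<in>{..k} - {0}. ca i * DcN i (\<lambda>t c. fps_nth (F t) (k - i)) t c = 0"
    proof
      fix i assume "i \<in> {..k} - {0}"
      then obtain j where "i = Suc j" by (cases i) auto
      then show "ca i * DcN i (\<lambda>t c. fps_nth (F t) (k - i)) t c = 0" by (simp add: DcN_tfun)
    qed
  qed auto
  also have "\<dots> = fps_nth (F t) k" by (simp add: ca_def)
  finally show "fps_nth (cshift (\<lambda>t c. F t) t c) k = fps_nth (F t) k" .
qed

lemma cshift_c: "cshift (\<lambda>t c. fps_const c) t c = fps_const c - fps_X"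
proof (rule fps_ext)
  fix k
  have e: "(\<lambda>t c. fps_nth (fps_const c) (k - m)) = (if m = k then (\<lambda>t c. c) else (\<lambda>t c. 0))" if "m \<le> k" for m
    using that by auto
  have "fps_nth (cshift (\<lambda>t c. fps_const c) t c) k = (\<Sum>m\<le>k. ca m * DcN m (\<lambda>t c. fps_nth (fps_const c) (k - m)) t c)"
    by (rule cshift_nth')
  also have "\<dots> = (\<Sum>m\<le>k. (if m = k then ca k * DcN k (\<lambda>t c. c) t c else 0))"
    by (rule sum.cong) (auto simp: e)
  also have "\<dots> = ca k * DcN k (\<lambda>t c. c) t c" by simp
  also have "\<dots> = fps_nth (fps_const c - fps_X) k"
  proof (cases k)
    case 0 then show ?thesis by (simp add: ca_def)
  next
    case (Suc j) then show ?thesis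
      by (cases j) (simp_all add: ca_def DcN_cv1 DcN_cv)
  qed
  finally show "fps_nth (cshift (\<lambda>t c. fps_const c) t c) k = fps_nth (fps_const c - fps_X) k" .
qed

lemma cshift_fdt: "gf S \<Longrightarrow> (t, c) \<in> U \<Longrightarrow> cshift (fdt S) t c = fdt (cshift S) t c"
proof (rule fps_ext)
  fix k assume gS: "gf S" and p: "(t, c) \<in> U"
  have fe: "(\<lambda>t c. fps_nth (fdt S t c) j) = Dt (\<lambda>t c. fps_nth (S t c) j)" for j
    by (intro ext) (simp add: fdt_nth)
  have "fps_nth (cshift (fdt S) t c) k = (\<Sum>m\<le>k. ca m * DcN m (Dt (\<lambda>t c. fps_nth (S t c) (k - m))) t c)"
    by (simp add: cshift_nth' fe)
  also have "\<dots> = (\<Sum>m\<le>k. ca m * Dt (DcN m (\<lambda>t c. fps_nth (S t c) (k - m))) t c)"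
    using gS p by (simp add: DcN_Dt)
  also have "\<dots> = Dt (\<lambda>t c. \<Sum>m\<le>k. ca m * DcN m (\<lambda>t c. fps_nth (S t c) (k - m)) t c) t c"
    using gS p by simp
  also have "\<dots> = fps_nth (fdt (cshift S) t c) k"
    by (simp add: fdt_nth cshift_nth')
  finally show "fps_nth (cshift (fdt S) t c) k = fps_nth (fdt (cshift S) t c) k" .
qed

lemma cshift_pow: "gf S \<Longrightarrow> (t, c) \<in> U \<Longrightarrow> cshift (\<lambda>t c. S t c ^ n) t c = cshift S t c ^ n"
proof (induction n)
  case 0 then show ?case using cshift_tfun[of "\<lambda>t. 1"] by simp
next
  case (Suc n)
  then show ?case using cshift_mult[of S "\<lambda>t c. S t c ^ n" t c] by simp
qed

end



context PII begin

lemma uniq_sys: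
  fixes L N L' N' K :: "complex \<Rightarrow> complex \<Rightarrow> complex fps"
  assumes L0: "\<And>t c. (t, c) \<in> U \<Longrightarrow> fps_nth (L t c) 0 = l0 t c"
    and L0': "\<And>t c. (t, c) \<in> U \<Longrightarrow> fps_nth (L' t c) 0 = l0 t c"
    and N0: "\<And>t c. (t, c) \<in> U \<Longrightarrow> fps_nth (N t c) 0 = fps_nth (N' t c) 0"
    and e1: "\<And>t c. (t, c) \<in> U \<Longrightarrow> fps_X * fdt L t c = N t c"
    and e1': "\<And>t c. (t, c) \<in> U \<Longrightarrow> fps_X * fdt L' t c = N' t c"
    and e2: "\<And>t c. (t, c) \<in> U \<Longrightarrow> fps_X * fdt N t c = fps_const 2 * L t c ^ 3 + fps_const t * L t c + K t c"
    and e2': "\<And>t c. (t, c) \<in> U \<Longrightarrow> fps_X * fdt N' t c = fps_const 2 * L' t c ^ 3 + fps_const t * L' t c + K t c"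
  shows "\<forall>t c. (t, c) \<in> U \<longrightarrow> fps_nth (L t c) k = fps_nth (L' t c) k \<and> fps_nth (N t c) k = fps_nth (N' t c) k"
proof (induction k rule: less_induct)
  case (less k)
  show ?case
  proof (cases k)
    case 0 then show ?thesis using L0 L0' N0 by simp
  next
    case (Suc j)
    have IH: "fps_nth (L t c) i = fps_nth (L' t c) i" "fps_nth (N t c) i = fps_nth (N' t c) i"
      if "i \<le> j" "(t, c) \<in> U" for i t c
      using less[of i] Suc that by auto
    show ?thesis
    proof (intro allI impI)
      fix t c assume p: "(t, c) \<in> U"
      have dL: "Dt (\<lambda>t c. fps_nth (L t c) j) t c = Dt (\<lambda>t c. fps_nth (L' t c) j) t c"
        by (rule Dt_congI) (use IH p in auto)
      have dN: "Dt (\<lambda>t c. fps_nth (N t c) j) t c = Dt (\<lambda>t c. fps_nth (N' t c) j) t c"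
        by (rule Dt_congI) (use IH p in auto)
      have nS: "fps_nth (N t c) (Suc j) = Dt (\<lambda>t c. fps_nth (L t c) j) t c"
      proof -
        have "fps_nth (N t c) (Suc j) = fps_nth (fps_X * fdt L t c) (Suc j)" using e1[OF p] by simp
        also have "\<dots> = fps_nth (fdt L t c) j" by simp
        finally show ?thesis by (simp only: fdt_nth)
      qed
      have nS': "fps_nth (N' t c) (Suc j) = Dt (\<lambda>t c. fps_nth (L' t c) j) t c"
      proof -
        have "fps_nth (N' t c) (Suc j) = fps_nth (fps_X * fdt L' t c) (Suc j)" using e1'[OF p] by simp
        also have "\<dots> = fps_nth (fdt L' t c) j" by simp
        finally show ?thesis by (simp only: fdt_nth)
      qed
      have lS: "Dt (\<lambda>t c. fps_nth (N t c) j) t c = 2 * fps_nth (L t c ^ 3) (Suc j) + t * fps_nth (L t c) (Suc j) + fps_nth (K t c) (Suc j)"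
      proof -
        have "Dt (\<lambda>t c. fps_nth (N t c) j) t c = fps_nth (fdt N t c) j" by (simp only: fdt_nth)
        also have "\<dots> = fps_nth (fps_X * fdt N t c) (Suc j)" by simp
        also have "\<dots> = 2 * fps_nth (L t c ^ 3) (Suc j) + t * fps_nth (L t c) (Suc j) + fps_nth (K t c) (Suc j)"
          using e2[OF p] by simp
        finally show ?thesis .
      qed
      have lS': "Dt (\<lambda>t c. fps_nth (N' t c) j) t c = 2 * fps_nth (L' t c ^ 3) (Suc j) + t * fps_nth (L' t c) (Suc j) + fps_nth (K t c) (Suc j)"
      proof -
        have "Dt (\<lambda>t c. fps_nth (N' t c) j) t c = fps_nth (fdt N' t c) j" by (simp only: fdt_nth)
        also have "\<dots> = fps_nth (fps_X * fdt N' t c) (Suc j)" by simp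
        also have "\<dots> = 2 * fps_nth (L' t c ^ 3) (Suc j) + t * fps_nth (L' t c) (Suc j) + fps_nth (K t c) (Suc j)"
          using e2'[OF p] by simp
        finally show ?thesis .
      qed
      have cd: "fps_nth (L t c ^ 3) (Suc j) - fps_nth (L' t c ^ 3) (Suc j) =
          3 * fps_nth (L t c) 0 ^ 2 * (fps_nth (L t c) (Suc j) - fps_nth (L' t c) (Suc j))"
        by (rule cube_diff) (use IH p in auto)
      have "2 * fps_nth (L t c ^ 3) (Suc j) + t * fps_nth (L t c) (Suc j) =
            2 * fps_nth (L' t c ^ 3) (Suc j) + t * fps_nth (L' t c) (Suc j)"
        using lS lS' dN by simp
      then have "Del t c * (fps_nth (L t c) (Suc j) - fps_nth (L' t c) (Suc j)) = 0"
        using cd L0[OF p] unfolding Del_def by algebra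
      then have "fps_nth (L t c) (Suc j) = fps_nth (L' t c) (Suc j)" using p by simp
      moreover have "fps_nth (N t c) (Suc j) = fps_nth (N' t c) (Suc j)" using nS nS' dL by simp
      ultimately show "fps_nth (L t c) k = fps_nth (L' t c) k \<and> fps_nth (N t c) k = fps_nth (N' t c) k"
        using Suc by simp
    qed
  qed
qed

lemma uniq_ric:
  fixes R R' F :: "complex \<Rightarrow> complex \<Rightarrow> complex fps"
  assumes R0: "\<And>t c. (t, c) \<in> U \<Longrightarrow> fps_nth (R t c) 0 = sq t c"
    and R0': "\<And>t c. (t, c) \<in> U \<Longrightarrow> fps_nth (R' t c) 0 = sq t c"
    and e: "\<And>t c. (t, c) \<in> U \<Longrightarrow> R t c ^ 2 + fps_X * fdt R t c = F t c"
    and e': "\<And>t c. (t, c) \<in> U \<Longrightarrow> R' t c ^ 2 + fps_X * fdt R' t c = F t c"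
  shows "\<forall>t c. (t, c) \<in> U \<longrightarrow> fps_nth (R t c) k = fps_nth (R' t c) k"
proof (induction k rule: less_induct)
  case (less k)
  show ?case
  proof (cases k)
    case 0 then show ?thesis using R0 R0' by simp
  next
    case (Suc j)
    have IH: "fps_nth (R t c) i = fps_nth (R' t c) i" if "i \<le> j" "(t, c) \<in> U" for i t c
      using less[of i] Suc that by auto
    show ?thesis
    proof (intro allI impI)
      fix t c assume p: "(t, c) \<in> U"
      have dR: "Dt (\<lambda>t c. fps_nth (R t c) j) t c = Dt (\<lambda>t c. fps_nth (R' t c) j) t c"
        by (rule Dt_congI) (use IH p in auto)
      have A: "fps_nth (R t c ^ 2) (Suc j) + Dt (\<lambda>t c. fps_nth (R t c) j) t c = fps_nth (F t c) (Suc j)"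
      proof -
        have "fps_nth (R t c ^ 2) (Suc j) + Dt (\<lambda>t c. fps_nth (R t c) j) t c = fps_nth (R t c ^ 2) (Suc j) + fps_nth (fdt R t c) j"
          by (simp only: fdt_nth)
        also have "\<dots> = fps_nth (R t c ^ 2 + fps_X * fdt R t c) (Suc j)" by simp
        finally show ?thesis using e[OF p] by simp
      qed
      have A': "fps_nth (R' t c ^ 2) (Suc j) + Dt (\<lambda>t c. fps_nth (R' t c) j) t c = fps_nth (F t c) (Suc j)"
      proof -
        have "fps_nth (R' t c ^ 2) (Suc j) + Dt (\<lambda>t c. fps_nth (R' t c) j) t c = fps_nth (R' t c ^ 2) (Suc j) + fps_nth (fdt R' t c) j"
          by (simp only: fdt_nth)
        also have "\<dots> = fps_nth (R' t c ^ 2 + fps_X * fdt R' t c) (Suc j)" by simp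
        finally show ?thesis using e'[OF p] by simp
      qed
      have sd: "fps_nth (R t c ^ 2) (Suc j) - fps_nth (R' t c ^ 2) (Suc j) =
          2 * fps_nth (R t c) 0 * (fps_nth (R t c) (Suc j) - fps_nth (R' t c) (Suc j))"
        by (rule square_diff) (use IH p in auto)
      have "fps_nth ((R t c)^2) (Suc j) = fps_nth ((R' t c)^2) (Suc j)" using A A' dR by (metis add_right_cancel)
      then have "2 * sq t c * (fps_nth (R t c) (Suc j) - fps_nth (R' t c) (Suc j)) = 0"
        using sd R0[OF p] by simp
      then show "fps_nth (R t c) k = fps_nth (R' t c) k" using p Suc by simp
    qed
  qed
qed

end

context PII2 begin

definition Bf where "Bf t c = bden t (lam t c) (nu t c)"
definition IB where "IB t c = inverse (Bf t c)"

lemma Bf_fun: "Bf = (\<lambda>t c. nu t c - lam t c ^ 2 - fps_const (t / 2))"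
  by (intro ext) (simp add: Bf_def bden_def)

lemma gf_Bf[simp]: "gf Bf" unfolding Bf_fun by simp

lemma Bf0: "(t, c) \<in> U \<Longrightarrow> fps_nth (Bf t c) 0 = - (l0 t c ^ 2 + t / 2)"
  by (simp add: Bf_fun power2_eq_square)

lemma cub': "(t, c) \<in> U \<Longrightarrow> c = - 2 * l0 t c * (l0 t c ^ 2 + t / 2)"
proof -
  assume p: "(t, c) \<in> U"
  have e: "- 2 * l0 t c * (l0 t c ^ 2 + t / 2) = - (2 * l0 t c ^ 3 + t * l0 t c)"
    by (simp add: field_simps power2_eq_square power3_eq_cube)
  have "c = - (2 * l0 t c ^ 3 + t * l0 t c)" using cub[OF p] by (simp add: eq_neg_iff_add_eq_0 algebra_simps)
  then show ?thesis using e by simp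
qed

lemma Bf0_nz[simp]: "(t, c) \<in> U \<Longrightarrow> fps_nth (Bf t c) 0 = 0 \<longleftrightarrow> False"
proof -
  assume p: "(t, c) \<in> U"
  have "l0 t c ^ 2 + t / 2 \<noteq> 0"
  proof
    assume "l0 t c ^ 2 + t / 2 = 0"
    then have "c = 0" using cub'[OF p] by simp
    then show False using cnz[OF p] by simp
  qed
  then have nz: "- (l0 t c ^ 2 + t / 2) = 0 \<longleftrightarrow> False" by (simp only: neg_equal_0_iff_equal)
  show ?thesis by (simp only: Bf0[OF p] nz)
qed

lemma IB_fun: "IB = (\<lambda>t c. inverse (Bf t c))" by (intro ext) (simp add: IB_def)

lemma gf_IB[simp]: "gf IB" unfolding IB_fun by simp

lemma IB_mult: "(t, c) \<in> U \<Longrightarrow> Bf t c * IB t c = 1"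
  by (simp add: IB_def inverse_mult_eq_1')

lemma IB0: "(t, c) \<in> U \<Longrightarrow> fps_nth (IB t c) 0 = inverse (- (l0 t c ^ 2 + t / 2))"
  by (simp add: IB_def Bf0)

lemma two_fps: "(2::complex fps) = fps_const 2" and six_fps: "(6::complex fps) = fps_const 6"
  by (simp_all add: numeral_fps_const)

lemma fct: "fps_const (t::complex) = 2 * fps_const (t / 2)"
  by (simp add: two_fps)

lemma W_lam[simp]: "(t, c) \<in> U \<Longrightarrow> W lam t c = nu t c"
  using eq1 by (simp add: W_def)

lemma W_nu[simp]: "(t, c) \<in> U \<Longrightarrow> W nu t c = 2 * lam t c ^ 3 + 2 * fps_const (t / 2) * lam t c + fps_const c"
  using eq2[of t c] by (simp add: W_def two_fps)

lemma W_Rt[simp]: "(t, c) \<in> U \<Longrightarrow> W Rt t c = 6 * lam t c ^ 2 + 2 * fps_const (t / 2) - Rt t c ^ 2"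
proof -
  assume p: "(t, c) \<in> U"
  have "Rt t c ^ 2 + W Rt t c = 6 * lam t c ^ 2 + 2 * fps_const (t / 2)"
    using eqR[OF p] by (simp add: W_def two_fps six_fps)
  then show ?thesis by (simp add: algebra_simps)
qed

lemma W_Bf[simp]: "(t, c) \<in> U \<Longrightarrow> W Bf t c =
   2 * lam t c ^ 3 + 2 * fps_const (t / 2) * lam t c + fps_const c - 2 * lam t c * nu t c - fps_X * fps_const (1 / 2)"
  unfolding Bf_fun by (simp add: algebra_simps)

lemma W_IB[simp]: "(t, c) \<in> U \<Longrightarrow> W IB t c = - W Bf t c * IB t c ^ 2"
  unfolding IB_fun by simp

definition BLf where "BLf t c = - lam t c + chalf c * IB t c"
definition BNf where "BNf t c = - nu t c + 2 * chalf c * lam t c * IB t c - (chalf c * IB t c) ^ 2"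

lemma BLf_fun: "BLf = (\<lambda>t c. - lam t c + chalf c * IB t c)" by (intro ext) (simp add: BLf_def)
lemma BNf_fun: "BNf = (\<lambda>t c. - nu t c + 2 * chalf c * lam t c * IB t c - (chalf c * IB t c) ^ 2)"
  by (intro ext) (simp add: BNf_def)

lemma gf_BLf[simp]: "gf BLf" unfolding BLf_fun by simp
lemma gf_BNf[simp]: "gf BNf" unfolding BNf_fun by simp

lemma BL_eq: "(t, c) \<in> U \<Longrightarrow> BLambda t c (lam t c) (nu t c) = BLf t c"
  by (simp add: BLambda_def BLf_def IB_def Bf_def[symmetric] fps_divide_unit)

lemma BN_eq: "(t, c) \<in> U \<Longrightarrow> BN t c (lam t c) (nu t c) = BNf t c"
  by (simp add: BN_def BNf_def IB_def Bf_def[symmetric] fps_divide_unit two_fps)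

lemma hB: "(t, c) \<in> U \<Longrightarrow> (nu t c - lam t c ^ 2 - fps_const (t / 2)) * IB t c = 1"
  using IB_mult[of t c] by (simp add: Bf_fun)

lemma W_BLf: "(t, c) \<in> U \<Longrightarrow> W BLf t c = BNf t c"
proof -
  assume p: "(t, c) \<in> U"
  have "W BLf t c = - nu t c + chalf c * (- (2 * lam t c ^ 3 + 2 * fps_const (t / 2) * lam t c + fps_const c - 2 * lam t c * nu t c - fps_X * fps_const (1 / 2)) * IB t c ^ 2)"
    unfolding BLf_fun using p by simp
  also have "\<dots> = BNf t c"
    using hB[OF p] unfolding BNf_def chalf_def by algebra
  finally show ?thesis .
qed


lemma half2: "2 * fps_const (1 / 2) = (1::complex fps)"
  by (simp add: two_fps)

lemma W_BNf: assumes p: "(t, c) \<in> U"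
  shows "W BNf t c = fps_const 2 * BLf t c ^ 3 + fps_const t * BLf t c + (fps_const c - fps_X)"
  apply (subst BNf_fun)
  apply (simp add: p)
  apply (simp add: BLf_def chalf_def)
  using hB[OF p] fct[of t] half2 two_fps by algebra


lemma cshift0: "fps_nth (cshift S t c) 0 = fps_nth (S t c) 0"
  by (simp add: cshift_nth' ca_def)

lemma cs_e1: assumes p: "(t, c) \<in> U" shows "fps_X * fdt (cshift lam) t c = cshift nu t c"
proof -
  have "cshift nu t c = cshift (\<lambda>t c. fps_X * fdt lam t c) t c"
    by (rule cshift_cong) (simp_all add: eq1 p)
  also have "\<dots> = cshift (\<lambda>t c. fps_X) t c * cshift (fdt lam) t c"
    by (rule cshift_mult) (simp_all add: p)
  also have "\<dots> = fps_X * fdt (cshift lam) t c"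
    using cshift_tfun[of "\<lambda>t. fps_X" t c] cshift_fdt[of lam t c] p by simp
  finally show ?thesis by simp
qed

lemma cs_e2: assumes p: "(t, c) \<in> U"
  shows "fps_X * fdt (cshift nu) t c = fps_const 2 * cshift lam t c ^ 3 + fps_const t * cshift lam t c + (fps_const c - fps_X)"
proof -
  have "fps_X * fdt (cshift nu) t c = cshift (\<lambda>t c. fps_X) t c * cshift (fdt nu) t c"
    using cshift_tfun[of "\<lambda>t. fps_X" t c] cshift_fdt[of nu t c] p by simp
  also have "\<dots> = cshift (\<lambda>t c. fps_X * fdt nu t c) t c"
    by (rule cshift_mult[symmetric]) (simp_all add: p)
  also have "\<dots> = cshift (\<lambda>t c. fps_const 2 * lam t c ^ 3 + fps_const t * lam t c + fps_const c) t c"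
    by (rule cshift_cong) (simp_all add: eq2 p)
  also have "\<dots> = fps_const 2 * cshift lam t c ^ 3 + fps_const t * cshift lam t c + (fps_const c - fps_X)"
    using p by (simp add: cshift_add cshift_mult cshift_pow cshift_tfun cshift_c)
  finally show ?thesis .
qed

lemma inv_aux: "B \<noteq> 0 \<Longrightarrow> (c::complex) = -2 * l * B \<Longrightarrow> c * inverse (- B) = 2 * l"
  by (simp add: field_simps)

lemma Bnz: assumes p: "(t, c) \<in> U" shows "l0 t c ^ 2 + t / 2 \<noteq> 0"
proof
  assume "l0 t c ^ 2 + t / 2 = 0"
  then have "c = 0" using cub'[OF p] by simp
  then show False using cnz[OF p] by simp
qed

lemma q0: "(t, c) \<in> U \<Longrightarrow> c * inverse (- (l0 t c ^ 2 + t / 2)) = 2 * l0 t c"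
  using inv_aux[OF Bnz cub'] by simp

lemma BLf0: "(t, c) \<in> U \<Longrightarrow> fps_nth (BLf t c) 0 = l0 t c"
proof -
  assume p: "(t, c) \<in> U"
  have "fps_nth (BLf t c) 0 = - l0 t c + c * inverse (- (l0 t c ^ 2 + t / 2))"
    using p by (simp add: BLf_def IB0 chalf_def)
  then show ?thesis using q0[OF p] by simp
qed

lemma BNf0: "(t, c) \<in> U \<Longrightarrow> fps_nth (BNf t c) 0 = 0"
proof -
  assume p: "(t, c) \<in> U"
  have "fps_nth (BNf t c) 0 = 2 * l0 t c * (c * inverse (- (l0 t c ^ 2 + t / 2))) - (c * inverse (- (l0 t c ^ 2 + t / 2))) ^ 2"
    using p by (simp add: BNf_def IB0 chalf_def power2_eq_square)
  then show ?thesis using q0[OF p] by (simp add: power2_eq_square)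
qed

lemma part1: assumes p: "(t, c) \<in> U" shows "BLf t c = cshift lam t c" "BNf t c = cshift nu t c"
proof -
  have "\<forall>t c. (t, c) \<in> U \<longrightarrow> fps_nth (BLf t c) k = fps_nth (cshift lam t c) k \<and> fps_nth (BNf t c) k = fps_nth (cshift nu t c) k" for k
  proof (rule uniq_sys[where K = "\<lambda>t c. fps_const c - fps_X"])
    show "\<And>t c. (t, c) \<in> U \<Longrightarrow> fps_nth (BLf t c) 0 = l0 t c" by (rule BLf0)
    show "\<And>t c. (t, c) \<in> U \<Longrightarrow> fps_nth (cshift lam t c) 0 = l0 t c" by (simp add: cshift0)
    show "\<And>t c. (t, c) \<in> U \<Longrightarrow> fps_nth (BNf t c) 0 = fps_nth (cshift nu t c) 0" by (simp add: cshift0 BNf0)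
    show "\<And>t c. (t, c) \<in> U \<Longrightarrow> fps_X * fdt BLf t c = BNf t c" using W_BLf by (simp add: W_def)
    show "\<And>t c. (t, c) \<in> U \<Longrightarrow> fps_X * fdt (cshift lam) t c = cshift nu t c" by (rule cs_e1)
    show "\<And>t c. (t, c) \<in> U \<Longrightarrow> fps_X * fdt BNf t c = fps_const 2 * BLf t c ^ 3 + fps_const t * BLf t c + (fps_const c - fps_X)"
      using W_BNf by (simp add: W_def)
    show "\<And>t c. (t, c) \<in> U \<Longrightarrow> fps_X * fdt (cshift nu) t c = fps_const 2 * cshift lam t c ^ 3 + fps_const t * cshift lam t c + (fps_const c - fps_X)"
      by (rule cs_e2)
  qed
  then show "BLf t c = cshift lam t c" "BNf t c = cshift nu t c" using p by (auto simp: fps_eq_iff)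
qed


lemma gf_W[simp]: "gf S \<Longrightarrow> gf (W S)"
proof -
  assume "gf S"
  have "W S = (\<lambda>t c. fps_X * fdt S t c)" by (intro ext) (simp add: W_def)
  then show "gf (W S)" using \<open>gf S\<close> by simp
qed

definition LA where "LA t c = 1 + chalf c * (Rt t c - 2 * lam t c) * IB t c ^ 2"
lemma LA_fun: "LA = (\<lambda>t c. 1 + chalf c * (Rt t c - 2 * lam t c) * IB t c ^ 2)"
  by (intro ext) (simp add: LA_def)
lemma gf_LA[simp]: "gf LA" unfolding LA_fun by simp

lemma LA0_aux:
  fixes l s t c B :: complex
  assumes B: "2 * B = 2 * l^2 + t" and Bnz: "B \<noteq> 0" and cB: "c = -2*l*B" and s2: "s^2 = 6*l^2 + t"
  shows "1 + c * (s - 2*l) * inverse (-B)^2 \<noteq> 0"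
proof
  assume h: "1 + c * (s - 2*l) * inverse (-B)^2 = 0"
  have eq: "B^2 * (1 + c * (s - 2*l) * inverse (-B)^2) = B^2 + c * (s - 2*l)"
    using Bnz by (simp add: power2_eq_square field_simps)
  have h2: "B^2 + c * (s - 2*l) = 0" using h eq by simp
  have "B * (B - 2 * l * (s - 2 * l)) = 0" using h2 cB by algebra
  then have e1: "B = 2 * l * (s - 2 * l)" using Bnz by simp
  have "B^2 = 0" using e1 B s2 by algebra
  then show False using Bnz by simp
qed

lemma LA0_nz[simp]: assumes p: "(t, c) \<in> U" shows "fps_nth (LA t c) 0 = 0 \<longleftrightarrow> False"
proof -
  have e: "fps_nth (LA t c) 0 = 1 + c * (sq t c - 2 * l0 t c) * inverse (- (l0 t c ^ 2 + t / 2)) ^ 2"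
    using p by (simp add: LA_def IB0 chalf_def power2_eq_square)
  have "1 + c * (sq t c - 2 * l0 t c) * inverse (- (l0 t c ^ 2 + t / 2)) ^ 2 \<noteq> 0"
    by (rule LA0_aux) (use p Bnz[OF p] cub'[OF p] sqsq[OF p] in auto)
  then show ?thesis using e by simp
qed

lemma logarg_eq: assumes p: "(t, c) \<in> U" shows "logarg Rt lam nu t c = LA t c"
proof -
  have nz: "fps_nth (Bf t c ^ 2) 0 \<noteq> 0" using p by (simp add: power2_eq_square)
  have "logarg Rt lam nu t c = 1 + chalf c * (Rt t c - 2 * lam t c) * inverse (Bf t c ^ 2)"
    using nz by (simp add: logarg_def Bf_def[symmetric] fps_divide_unit two_fps)
  also have "\<dots> = LA t c" by (simp add: LA_def IB_def fps_inverse_power)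
  finally show ?thesis .
qed

lemma fdlog_eq: assumes p: "(t, c) \<in> U" shows "fdlog (logarg Rt lam nu) t c = fdt LA t c * inverse (LA t c)"
proof -
  have "fdt (logarg Rt lam nu) t c = fdt LA t c" by (rule fdt_cong) (simp_all add: logarg_eq p)
  then show ?thesis using p by (simp add: fdlog_def logarg_eq fps_divide_unit)
qed

definition U1 where "U1 t c = chalf c * ((6 * lam t c ^ 2 + 2 * fps_const (t / 2) - Rt t c ^ 2 - 2 * nu t c) * IB t c ^ 2
   - 2 * (Rt t c - 2 * lam t c) * (2 * lam t c ^ 3 + 2 * fps_const (t / 2) * lam t c + fps_const c - 2 * lam t c * nu t c - fps_X * fps_const (1 / 2)) * IB t c ^ 3)"
lemma U1_fun: "U1 = (\<lambda>t c. chalf c * ((6 * lam t c ^ 2 + 2 * fps_const (t / 2) - Rt t c ^ 2 - 2 * nu t c) * IB t c ^ 2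
   - 2 * (Rt t c - 2 * lam t c) * (2 * lam t c ^ 3 + 2 * fps_const (t / 2) * lam t c + fps_const c - 2 * lam t c * nu t c - fps_X * fps_const (1 / 2)) * IB t c ^ 3))"
  by (intro ext) (simp add: U1_def)
lemma gf_U1[simp]: "gf U1" unfolding U1_fun by simp

lemma W_LA[simp]: assumes p: "(t, c) \<in> U" shows "W LA t c = U1 t c"
  unfolding LA_fun
  apply (simp add: p)
  apply (simp add: U1_def)
  by algebra

lemma W_WLA[simp]: assumes p: "(t, c) \<in> U" shows "W (W LA) t c = W U1 t c"
  by (rule W_cong) (simp_all add: p)

lemma key: assumes p: "(t, c) \<in> U"
  shows "2 * Rt t c * U1 t c + W U1 t c = 6 * (BLf t c ^ 2 - lam t c ^ 2) * LA t c"
  unfolding U1_fun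
  apply (simp add: p)
  apply (simp add: BLf_def LA_def chalf_def)
  using hB[OF p] half2 two_fps by algebra


definition Rn where "Rn t c = Rt t c + W LA t c * inverse (LA t c)"
lemma Rn_fun: "Rn = (\<lambda>t c. Rt t c + W LA t c * inverse (LA t c))" by (intro ext) (simp add: Rn_def)

lemma LA_inv: "(t, c) \<in> U \<Longrightarrow> LA t c * inverse (LA t c) = 1"
  by (rule inverse_mult_eq_1') simp

lemma Rn_ric: assumes p: "(t, c) \<in> U"
  shows "Rn t c ^ 2 + fps_X * fdt Rn t c = fps_const 6 * BLf t c ^ 2 + fps_const t"
proof -
  have "fps_X * fdt Rn t c = W Rn t c" by (simp add: W_def)
  also have "\<dots> = (6 * lam t c ^ 2 + 2 * fps_const (t / 2) - Rt t c ^ 2) + W U1 t c * inverse (LA t c)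
      + U1 t c * (- U1 t c * inverse (LA t c) ^ 2)"
    unfolding Rn_fun using p by simp
  finally have e: "fps_X * fdt Rn t c = (6 * lam t c ^ 2 + 2 * fps_const (t / 2) - Rt t c ^ 2) + W U1 t c * inverse (LA t c)
      + U1 t c * (- U1 t c * inverse (LA t c) ^ 2)" .
  have r: "Rn t c = Rt t c + U1 t c * inverse (LA t c)" using p by (simp add: Rn_def)
  show ?thesis unfolding e r
    using key[OF p] LA_inv[OF p] fct[of t] six_fps by algebra
qed

lemma Rn0: "(t, c) \<in> U \<Longrightarrow> fps_nth (Rn t c) 0 = sq t c"
  by (simp add: Rn_def W_def)

lemma cs_ric: assumes p: "(t, c) \<in> U"
  shows "cshift Rt t c ^ 2 + fps_X * fdt (cshift Rt) t c = fps_const 6 * BLf t c ^ 2 + fps_const t"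
proof -
  have "cshift Rt t c ^ 2 + fps_X * fdt (cshift Rt) t c =
      cshift (\<lambda>t c. Rt t c ^ 2) t c + cshift (\<lambda>t c. fps_X) t c * cshift (fdt Rt) t c"
    using cshift_tfun[of "\<lambda>t. fps_X" t c] cshift_fdt[of Rt t c] cshift_pow[of Rt t c 2] p by simp
  also have "\<dots> = cshift (\<lambda>t c. Rt t c ^ 2 + fps_X * fdt Rt t c) t c"
    using p by (simp add: cshift_add cshift_mult)
  also have "\<dots> = cshift (\<lambda>t c. fps_const 6 * lam t c ^ 2 + fps_const t) t c"
    by (rule cshift_cong) (simp_all add: eqR p)
  also have "\<dots> = fps_const 6 * cshift lam t c ^ 2 + fps_const t"
    using p by (simp add: cshift_add cshift_mult cshift_pow cshift_tfun)
  also have "\<dots> = fps_const 6 * BLf t c ^ 2 + fps_const t"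
    using part1[OF p] by simp
  finally show ?thesis .
qed

lemma part2: assumes p: "(t, c) \<in> U"
  shows "Rt t c - cshift Rt t c = - fps_X * fdlog (logarg Rt lam nu) t c"
proof -
  have "\<forall>t c. (t, c) \<in> U \<longrightarrow> fps_nth (cshift Rt t c) k = fps_nth (Rn t c) k" for k
  proof (rule uniq_ric[where F = "\<lambda>t c. fps_const 6 * BLf t c ^ 2 + fps_const t"])
    show "\<And>t c. (t, c) \<in> U \<Longrightarrow> fps_nth (cshift Rt t c) 0 = sq t c" by (simp add: cshift0)
    show "\<And>t c. (t, c) \<in> U \<Longrightarrow> fps_nth (Rn t c) 0 = sq t c" by (rule Rn0)
    show "\<And>t c. (t, c) \<in> U \<Longrightarrow> cshift Rt t c ^ 2 + fps_X * fdt (cshift Rt) t c = fps_const 6 * BLf t c ^ 2 + fps_const t"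
      by (rule cs_ric)
    show "\<And>t c. (t, c) \<in> U \<Longrightarrow> Rn t c ^ 2 + fps_X * fdt Rn t c = fps_const 6 * BLf t c ^ 2 + fps_const t"
      by (rule Rn_ric)
  qed
  then have "cshift Rt t c = Rn t c" using p by (auto simp: fps_eq_iff)
  then show ?thesis using p by (simp add: Rn_def fdlog_eq W_def mult.assoc)
qed

lemma main: "(t, c) \<in> U \<Longrightarrow>
    BLambda t c (lam t c) (nu t c) = cshift lam t c \<and>
    BN t c (lam t c) (nu t c) = cshift nu t c \<and>
    Rt t c - cshift Rt t c = - fps_X * fdlog (logarg Rt lam nu) t c"
  using BL_eq BN_eq part1 part2 by simp

end

theorem mainTheorem5:
  fixes U :: "(complex \<times> complex) set"
    and l0 sq :: "complex \<Rightarrow> complex \<Rightarrow> complex"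
    and lam nu Rt :: "complex \<Rightarrow> complex \<Rightarrow> complex fps"
  assumes "open U"
    and "\<forall>(t, c)\<in>U. c \<noteq> 0"
    and "continuous_on U (\<lambda>(t, c). l0 t c)"
    and "\<forall>(t, c)\<in>U. (\<lambda>s. l0 s c) field_differentiable (at t) \<and>
                      (\<lambda>d. l0 t d) field_differentiable (at c)"
    and "\<forall>(t, c)\<in>U. 2 * l0 t c ^ 3 + t * l0 t c + c = 0"
    and "\<forall>(t, c)\<in>U. 6 * l0 t c ^ 2 + t \<noteq> 0"
    and "continuous_on U (\<lambda>(t, c). sq t c)"
    and "\<forall>(t, c)\<in>U. (\<lambda>s. sq s c) field_differentiable (at t) \<and>
                      (\<lambda>d. sq t d) field_differentiable (at c)"
    and "\<forall>(t, c)\<in>U. sq t c ^ 2 = 6 * l0 t c ^ 2 + t"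
    and "zero_param_solution U l0 lam nu"
    and "riccati_solution U sq lam Rt"
  shows "\<forall>(t, c)\<in>U.
           BLambda t c (lam t c) (nu t c) = cshift lam t c \<and>
           BN t c (lam t c) (nu t c) = cshift nu t c \<and>
           Rt t c - cshift Rt t c = - fps_X * fdlog (logarg Rt lam nu) t c"
proof -
  have I: "PII2 U l0 sq lam nu Rt"
    unfolding PII2_def PII2_axioms_def PII_def using assms by auto
  show ?thesis using PII2.main[OF I] by auto
qed

end
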